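(* Let $\phi:[0,1]\to[0,1]$ be concave with $\phi(0)=0$, $\phi(1)=1$. For $X\in\mathcal{M}$ define \[ \|X\|_{TM_\phi}=\sup_{0<t<1}\left\{\frac{\phi(t)}{t}\int_0^t X^*(\omega)\,d\omega+\frac{\phi(t)-1}{t-1}\int_t^1 X^*(\omega)\,d\omega\right\}. \] Then $X\mapsto\|X\|_{TM_\phi}$ (restricted to $\mathcal{M}^+$) is a positive translation equivariant ri function norm with fundamental function $\phi$, and it is the smallest one: for every positive translation equivariant ri function norm $R$ with fundamental function $\phi$, \[ \|X\|_{M_\phi}\le\|X\|_{TM_\phi}\le R(|X|)\quad\text{for all } X\in\mathcal{M} \text{ with } R(|X|)<\infty, \] where $\|X\|_{M_\phi}=\sup_{0<t\le 1}\frac{\phi(t)}{t}\int_0^t X^*(\omega)\,d\omega$ is the Marcinkiewicz norm.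
   Context: $\Omega=[0,1]$ with Lebesgue measure $\mu$; $\mathcal{M}$ is the set of Lebesgue measurable functions on $\Omega$ and $\mathcal{M}^+$ those with values in $[0,\infty]$; (in)equalities hold $\mu$-a.e. A Banach function norm is $R:\mathcal{M}^+\to[0,\infty]$ with: $R(X)=0\iff X=0$, $R(\lambda X)=\lambda R(X)$ ($\lambda\ge0$), $R(X+Y)\le R(X)+R(Y)$; $0\le X\le Y\Rightarrow R(X)\le R(Y)$; $0\le X_n\uparrow X$ a.e. $\Rightarrow R(X_n)\uparrow R(X)$; for each measurable $E$, $R(\chi_E)<\infty$ and $\int_E X\,d\mu\le c_E R(X)$ for some $0<c_E<\infty$ depending only on $E,R$; and normalised $R(\chi_\Omega)=1$. It is rearrangement invariant (an ri function norm) if $R(X)=R(Y)$ whenever $\mu\{|X|>\lambda\}=\mu\{|Y|>\lambda\}$ for all $\lambda\ge0$. The decreasing rearrangement is $X^*(\omega)=\inf\{\lambda\ge0:\mu\{|X|>\lambda\}\le\omega\}$ for $\omega\in[0,1)$. The fundamental function of $R$ is $\phi_R(t)=R(\chi_E)$ for any $E$ with $\mu(E)=t$. $R$ is positive translation equivariant (PTE) if $R(X+c)=R(X)+c$ for all $X\in\mathcal{M}^+$ and $c\in\mathbb{R}$ with $X+c\ge0$. *)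

theory Defs
  imports "HOL-Analysis.Analysis"
begin

abbreviation Om :: "real measure" where
  "Om \<equiv> lebesgue_on {0..1}"

definition Mplus :: "(real \<Rightarrow> ennreal) set" where
  "Mplus = borel_measurable Om"

definition distr_fun :: "(real \<Rightarrow> ennreal) \<Rightarrow> real \<Rightarrow> ennreal" where
  "distr_fun X l = emeasure Om {x \<in> space Om. ennreal l < X x}"

definition rearr :: "(real \<Rightarrow> ennreal) \<Rightarrow> real \<Rightarrow> ennreal" where
  "rearr X w = Inf {l :: ennreal. emeasure Om {x \<in> space Om. l < X x} \<le> ennreal w}"

definition banach_function_norm :: "((real \<Rightarrow> ennreal) \<Rightarrow> ennreal) \<Rightarrow> bool" where
  "banach_function_norm R \<longleftrightarrow>
     (\<forall>X\<in>Mplus. R X = 0 \<longleftrightarrow> (AE x in Om. X x = 0)) \<and>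
     (\<forall>X\<in>Mplus. \<forall>c::real. c \<ge> 0 \<longrightarrow> R (\<lambda>x. ennreal c * X x) = ennreal c * R X) \<and>
     (\<forall>X\<in>Mplus. \<forall>Y\<in>Mplus. R (\<lambda>x. X x + Y x) \<le> R X + R Y) \<and>
     (\<forall>X\<in>Mplus. \<forall>Y\<in>Mplus. (AE x in Om. X x \<le> Y x) \<longrightarrow> R X \<le> R Y) \<and>
     (\<forall>Xs X. (\<forall>n. Xs n \<in> Mplus) \<longrightarrow> X \<in> Mplus \<longrightarrow>
        (AE x in Om. incseq (\<lambda>n. Xs n x) \<and> (\<lambda>n. Xs n x) \<longlonglongrightarrow> X x) \<longrightarrow>
        (\<lambda>n. R (Xs n)) \<longlonglongrightarrow> R X) \<and>
     (\<forall>E\<in>sets Om. R (indicator E) < \<infinity> \<and>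
        (\<exists>c::real. 0 < c \<and> (\<forall>X\<in>Mplus. (\<integral>\<^sup>+ x\<in>E. X x \<partial>Om) \<le> ennreal c * R X))) \<and>
     R (indicator (space Om)) = 1"

definition rearrangement_invariant :: "((real \<Rightarrow> ennreal) \<Rightarrow> ennreal) \<Rightarrow> bool" where
  "rearrangement_invariant R \<longleftrightarrow>
     (\<forall>X\<in>Mplus. \<forall>Y\<in>Mplus. (\<forall>l::real. l \<ge> 0 \<longrightarrow> distr_fun X l = distr_fun Y l) \<longrightarrow> R X = R Y)"

definition ri_function_norm :: "((real \<Rightarrow> ennreal) \<Rightarrow> ennreal) \<Rightarrow> bool" where
  "ri_function_norm R \<longleftrightarrow> banach_function_norm R \<and> rearrangement_invariant R"

definition has_fundamental_function :: "((real \<Rightarrow> ennreal) \<Rightarrow> ennreal) \<Rightarrow> (real \<Rightarrow> real) \<Rightarrow> bool" where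
  "has_fundamental_function R \<phi> \<longleftrightarrow>
     (\<forall>E\<in>sets Om. R (indicator E) = ennreal (\<phi> (measure Om E)))"

text \<open>Positive translation equivariance: R(X+c) = R(X)+c whenever X+c >= 0
  (split into c >= 0 and c = -d with X >= d a.e.).\<close>
definition PTE :: "((real \<Rightarrow> ennreal) \<Rightarrow> ennreal) \<Rightarrow> bool" where
  "PTE R \<longleftrightarrow>
     (\<forall>X\<in>Mplus. \<forall>c::real. c \<ge> 0 \<longrightarrow> R (\<lambda>x. X x + ennreal c) = R X + ennreal c) \<and>
     (\<forall>X\<in>Mplus. \<forall>d::real. d \<ge> 0 \<longrightarrow> (AE x in Om. ennreal d \<le> X x) \<longrightarrow>
        R (\<lambda>x. X x - ennreal d) = R X - ennreal d)"

definition TM_norm :: "(real \<Rightarrow> real) \<Rightarrow> (real \<Rightarrow> ennreal) \<Rightarrow> ennreal" where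
  "TM_norm \<phi> X = (SUP t\<in>{0<..<1}.
      ennreal (\<phi> t / t) * (\<integral>\<^sup>+ w\<in>{0..t}. rearr X w \<partial>lborel)
    + ennreal ((\<phi> t - 1) / (t - 1)) * (\<integral>\<^sup>+ w\<in>{t..1}. rearr X w \<partial>lborel))"

definition M_norm :: "(real \<Rightarrow> real) \<Rightarrow> (real \<Rightarrow> ennreal) \<Rightarrow> ennreal" where
  "M_norm \<phi> X = (SUP t\<in>{0<..1}. ennreal (\<phi> t / t) * (\<integral>\<^sup>+ w\<in>{0..t}. rearr X w \<partial>lborel))"

end

theory Submission
  imports Defs
begin

definition DF :: "(real \<Rightarrow> ennreal) \<Rightarrow> ennreal \<Rightarrow> ennreal" where
  "DF X l = emeasure Om {x \<in> space Om. l < X x}"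

lemma Om_lmeas: "{0..1::real} \<in> lmeasurable" by simp

lemma finite_Om: "finite_measure Om"
  by (rule finite_measure_lebesgue_on) simp

lemma emeasure_Om_space: "emeasure Om {0..1} = 1"
  by (simp add: emeasure_restrict_space)

lemma sets_Om_borel: "A \<in> sets borel \<Longrightarrow> A \<inter> {0..1} \<in> sets Om"
  by (simp add: sets_restrict_space_iff)

lemma emeasure_Om: "A \<in> sets borel \<Longrightarrow> A \<subseteq> {0..1} \<Longrightarrow> emeasure Om A = emeasure lborel A"
  by (simp add: emeasure_restrict_space)

lemma borel_Om: "f \<in> borel_measurable borel \<Longrightarrow> f \<in> borel_measurable Om"
  by (simp add: measurable_completion measurable_restrict_space1 measurable_lborel1)

lemma DF_le1: "DF X l \<le> 1"
proof -
  have "DF X l \<le> emeasure Om (space Om)"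
    unfolding DF_def by (rule emeasure_space)
  then show ?thesis by (simp add: emeasure_Om_space)
qed

lemma DF_sets: "X \<in> Mplus \<Longrightarrow> {x \<in> space Om. l < X x} \<in> sets Om"
  unfolding Mplus_def by measurable

lemma DF_antimono: "X \<in> Mplus \<Longrightarrow> l \<le> l' \<Longrightarrow> DF X l' \<le> DF X l"
  unfolding DF_def by (intro emeasure_mono DF_sets) auto

lemma DF_top: "DF X top = 0"
  unfolding DF_def by simp

lemma rearr_antimono: "w \<le> w' \<Longrightarrow> rearr X w' \<le> rearr X w"
  unfolding rearr_def
  by (intro Inf_superset_mono) (auto intro: order_trans ennreal_leI)

lemma rearr_le: "DF X l \<le> ennreal w \<Longrightarrow> rearr X w \<le> l"
  unfolding rearr_def DF_def by (intro Inf_lower) simp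

lemma DF_rcont:
  assumes X: "X \<in> Mplus" and l: "l < top" and w: "ennreal w < DF X l"
  shows "\<exists>l'>l. ennreal w < DF X l'"
proof -
  obtain r where r: "l = ennreal r" "0 \<le> r" using l by (cases l) auto
  define A where "A m = {x \<in> space Om. ennreal (r + 1 / Suc m) < X x}" for m :: nat
  have Ains: "range A \<subseteq> sets Om" unfolding A_def using DF_sets[OF X] by auto
  have inc: "incseq A"
  proof (rule incseq_SucI)
    fix m
    have "ennreal (r + 1 / Suc (Suc m)) \<le> ennreal (r + 1 / Suc m)"
      by (intro ennreal_leI) (simp add: frac_le)
    then show "A m \<subseteq> A (Suc m)" unfolding A_def by (auto intro: le_less_trans)
  qed
  have U: "(\<Union>m. A m) = {x \<in> space Om. l < X x}"
  proof safe
    fix x m assume "x \<in> A m"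
    then show "l < X x" unfolding A_def r
      by (auto elim!: le_less_trans[rotated] intro!: ennreal_leI)
  next
    fix x assume x: "x \<in> space Om" "l < X x"
    show "x \<in> (\<Union>m. A m)"
    proof (cases "X x")
      case (real s)
      with x r have "r < s" by (simp add: ennreal_less_iff del: ennreal_plus)
      then obtain m where m: "1 / real (Suc m) < s - r"
        by (metis diff_gt_0_iff_gt nat_approx_posE)
      then have "r + 1 / Suc m < s" by simp
      then have "ennreal (r + 1 / Suc m) < X x" using real r
        by (simp add: ennreal_less_iff del: ennreal_plus)
      then show ?thesis using x unfolding A_def by auto
    next
      case top
      then show ?thesis using x unfolding A_def by auto
    qed
  qed (auto simp: A_def)
  have "(SUP m. emeasure Om (A m)) = DF X l"
    unfolding DF_def using SUP_emeasure_incseq[OF Ains inc] U by simp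
  with w obtain m where "ennreal w < emeasure Om (A m)"
    by (metis less_SUP_iff)
  moreover have "emeasure Om (A m) = DF X (ennreal (r + 1 / Suc m))"
    unfolding A_def DF_def ..
  moreover have "l < ennreal (r + 1 / Suc m)" using r by (simp add: ennreal_less_iff del: ennreal_plus)
  ultimately show ?thesis by (intro exI[of _ "ennreal (r + 1 / Suc m)"]) simp
qed

lemma less_rearr_iff:
  assumes X: "X \<in> Mplus"
  shows "l < rearr X w \<longleftrightarrow> ennreal w < DF X l"
proof
  assume "l < rearr X w"
  then show "ennreal w < DF X l" using rearr_le[of X l w] by (auto simp: not_less[symmetric])
next
  assume w: "ennreal w < DF X l"
  have l: "l < top" using w DF_top[of X] by (cases "l = top") (auto simp: less_top)
  obtain l' where l': "l < l'" "ennreal w < DF X l'" using DF_rcont[OF X l w] by blast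
  have "l' \<le> rearr X w" unfolding rearr_def
  proof (rule Inf_greatest)
    fix m assume "m \<in> {l. emeasure Om {x \<in> space Om. l < X x} \<le> ennreal w}"
    then have m: "DF X m \<le> ennreal w" unfolding DF_def by simp
    show "l' \<le> m"
    proof (rule ccontr)
      assume "\<not> l' \<le> m"
      then have "DF X l' \<le> DF X m" by (intro DF_antimono[OF X]) auto
      with m l' show False by auto
    qed
  qed
  with l' show "l < rearr X w" by auto
qed

lemma rearr_meas: "X \<in> Mplus \<Longrightarrow> rearr X \<in> borel_measurable borel"
  by (rule borel_measurableI_greater) (simp add: less_rearr_iff)

lemma rearr_Mplus: assumes X: "X \<in> Mplus" shows "rearr X \<in> Mplus"
  using borel_Om[OF rearr_meas[OF X]] unfolding Mplus_def .

lemma DF_rearr: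
  assumes X: "X \<in> Mplus" shows "DF (rearr X) l = DF X l"
proof -
  obtain d where d: "DF X l = ennreal d" "0 \<le> d" "d \<le> 1"
    using DF_le1[of X l] by (cases "DF X l") (auto simp: top_unique)
  have "{x \<in> space Om. l < rearr X x} = {0..<d}"
    using d by (auto simp: less_rearr_iff[OF X] ennreal_less_iff)
  then have "DF (rearr X) l = emeasure Om {0..<d}" unfolding DF_def by simp
  also have "\<dots> = emeasure lborel {0..<d}" using d by (intro emeasure_Om) auto
  also have "\<dots> = ennreal d" using d by simp
  finally show ?thesis using d by simp
qed

lemma distr_eq_DF:
  assumes X: "X \<in> Mplus" and Y: "Y \<in> Mplus" and eq: "\<And>l. DF X l = DF Y l"
  shows "distr Om borel X = distr Om borel Y"
proof (rule measure_eqI_generator_eq[where E="insert UNIV (range greaterThan)" and \<Omega>=UNIV and A="\<lambda>_. UNIV"])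
  show "Int_stable (insert UNIV (range greaterThan :: ennreal set set))"
  proof -
    have e: "{a<..} \<inter> {b<..} = {max a b<..}" for a b :: ennreal by auto
    show ?thesis unfolding Int_stable_def by (auto simp: e)
  qed
  show "insert UNIV (range greaterThan) \<subseteq> Pow (UNIV :: ennreal set)" by auto
  have S: "sigma_sets UNIV (insert UNIV (range greaterThan)) = sigma_sets (UNIV :: ennreal set) (range greaterThan)"
    by (rule sigma_sets_eqI) (auto intro: sigma_sets_top)
  have B: "sets (borel :: ennreal measure) = sigma_sets UNIV (range greaterThan)"
    by (subst borel_Ioi) simp
  show "sets (distr Om borel X) = sigma_sets UNIV (insert UNIV (range greaterThan))"
    using S B by simp
  show "sets (distr Om borel Y) = sigma_sets UNIV (insert UNIV (range greaterThan))"
    using S B by simp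
  show "range (\<lambda>_. UNIV) \<subseteq> insert UNIV (range greaterThan :: ennreal set set)" by auto
  show "(\<Union>i::nat. UNIV) = (UNIV :: ennreal set)" by simp
  show "emeasure (distr Om borel X) UNIV \<noteq> \<infinity>" for i :: nat
    using X unfolding Mplus_def by (simp add: emeasure_distr emeasure_Om_space)
  fix A assume "A \<in> insert UNIV (range greaterThan :: ennreal set set)"
  then show "emeasure (distr Om borel X) A = emeasure (distr Om borel Y) A"
  proof
    assume "A = UNIV" then show ?thesis using X Y unfolding Mplus_def by (simp add: emeasure_distr)
  next
    assume "A \<in> range greaterThan"
    then obtain l where A: "A = {l<..}" by auto
    have "emeasure (distr Om borel X) A = DF X l"
      using X unfolding Mplus_def DF_def A by (simp add: emeasure_distr vimage_def Int_def conj_commute)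
    moreover have "emeasure (distr Om borel Y) A = DF Y l"
      using Y unfolding Mplus_def DF_def A by (simp add: emeasure_distr vimage_def Int_def conj_commute)
    ultimately show ?thesis using eq by simp
  qed
qed

lemma nn_integral_eq_DF:
  assumes X: "X \<in> Mplus" and Y: "Y \<in> Mplus" and eq: "\<And>l. DF X l = DF Y l"
    and h: "h \<in> borel_measurable borel"
  shows "(\<integral>\<^sup>+x. h (X x) \<partial>Om) = (\<integral>\<^sup>+x. h (Y x) \<partial>Om)"
proof -
  have "(\<integral>\<^sup>+x. h (X x) \<partial>Om) = integral\<^sup>N (distr Om borel X) h"
    using X h unfolding Mplus_def by (simp add: nn_integral_distr)
  also have "\<dots> = integral\<^sup>N (distr Om borel Y) h" using distr_eq_DF[OF X Y eq] by simp
  also have "\<dots> = (\<integral>\<^sup>+x. h (Y x) \<partial>Om)"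
    using Y h unfolding Mplus_def by (simp add: nn_integral_distr)
  finally show ?thesis .
qed

lemma nn_integral_Om:
  assumes g: "g \<in> borel_measurable borel"
  shows "(\<integral>\<^sup>+x. g x \<partial>Om) = (\<integral>\<^sup>+x\<in>{0..1}. g x \<partial>lborel)"
  by (simp add: nn_integral_restrict_space nn_integral_completion)

lemma nn_integral_rearr:
  assumes X: "X \<in> Mplus" and h: "h \<in> borel_measurable borel"
  shows "(\<integral>\<^sup>+x. h (X x) \<partial>Om) = (\<integral>\<^sup>+w\<in>{0..1}. h (rearr X w) \<partial>lborel)"
proof -
  have "(\<integral>\<^sup>+x. h (X x) \<partial>Om) = (\<integral>\<^sup>+x. h (rearr X x) \<partial>Om)"
    using nn_integral_eq_DF[OF X rearr_Mplus[OF X] _ h] DF_rearr[OF X] by simp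
  also have "\<dots> = (\<integral>\<^sup>+w\<in>{0..1}. h (rearr X w) \<partial>lborel)"
    by (intro nn_integral_Om measurable_compose[OF rearr_meas[OF X] h])
  finally show ?thesis .
qed

definition phiok :: "(real \<Rightarrow> real) \<Rightarrow> bool" where
  "phiok \<phi> \<longleftrightarrow> (\<forall>t\<in>{0..1}. \<phi> t \<in> {0..1}) \<and> concave_on {0..1} \<phi> \<and> \<phi> 0 = 0 \<and> \<phi> 1 = 1"

lemma phi_range: "phiok \<phi> \<Longrightarrow> t \<in> {0..1} \<Longrightarrow> 0 \<le> \<phi> t \<and> \<phi> t \<le> 1"
  unfolding phiok_def by auto

lemma phi_ge: assumes p: "phiok \<phi>" and t: "0 \<le> t" "t \<le> 1" shows "t \<le> \<phi> t"
proof -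
  have c: "concave_on {0..1} \<phi>" "\<phi> 0 = 0" "\<phi> 1 = 1" using p unfolding phiok_def by auto
  have "(1 - t) * \<phi> 0 + t * \<phi> 1 \<le> \<phi> ((1 - t) *\<^sub>R 0 + t *\<^sub>R 1)"
    using t by (intro concave_onD[OF c(1)]) auto
  then show ?thesis using c by simp
qed

lemma phi_chord0: assumes p: "phiok \<phi>" and st: "0 \<le> s" "s \<le> t" "0 < t" "t \<le> 1"
  shows "\<phi> t / t * s \<le> \<phi> s"
proof -
  have c: "concave_on {0..1} \<phi>" "\<phi> 0 = 0" using p unfolding phiok_def by auto
  have "(1 - s/t) * \<phi> 0 + (s/t) * \<phi> t \<le> \<phi> ((1 - s/t) *\<^sub>R 0 + (s/t) *\<^sub>R t)"
    using st by (intro concave_onD[OF c(1)]) auto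
  then have "s * \<phi> t / t \<le> \<phi> s" using c st by simp
  moreover have "\<phi> t / t * s = s * \<phi> t / t" by simp
  ultimately show ?thesis by (metis mult.commute times_divide_eq_left)
qed

lemma phi_chord1: assumes p: "phiok \<phi>" and st: "0 \<le> t" "t \<le> s" "s \<le> 1" "t < 1"
  shows "\<phi> t + (\<phi> t - 1) / (t - 1) * (s - t) \<le> \<phi> s"
proof -
  have c: "concave_on {0..1} \<phi>" "\<phi> 1 = 1" using p unfolding phiok_def by auto
  define u where "u = (s - t) / (1 - t)"
  have u: "0 \<le> u" "u \<le> 1" using st by (auto simp: u_def)
  have "(1 - u) * \<phi> t + u * \<phi> 1 \<le> \<phi> ((1 - u) *\<^sub>R t + u *\<^sub>R 1)"
    using st u by (intro concave_onD[OF c(1)]) auto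
  moreover have "(1 - u) *\<^sub>R t + u *\<^sub>R 1 = t + u * (1 - t)" by (simp add: algebra_simps)
  moreover have "u * (1 - t) = s - t" using st by (simp add: u_def)
  moreover have "(1 - u) * \<phi> t + u * \<phi> 1 = \<phi> t + (\<phi> t - 1) / (t - 1) * (s - t)"
  proof -
    have e1: "(\<phi> t - 1) / (t - 1) = (1 - \<phi> t) / (1 - t)"
      by (metis minus_diff_eq minus_divide_divide)
    have "(1 - u) * \<phi> t + u * \<phi> 1 = \<phi> t + u * (1 - \<phi> t)" using c by (simp add: algebra_simps)
    also have "\<dots> = \<phi> t + (1 - \<phi> t) / (1 - t) * (s - t)" by (simp add: u_def)
    finally show ?thesis using e1 by simp
  qed
  ultimately show ?thesis by simp
qed

definition val :: "(real \<Rightarrow> real) \<Rightarrow> (real \<Rightarrow> ennreal) \<Rightarrow> real \<Rightarrow> ennreal" where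
  "val \<phi> F t = ennreal (\<phi> t / t) * (\<integral>\<^sup>+ w\<in>{0..t}. F w \<partial>lborel)
    + ennreal ((\<phi> t - 1) / (t - 1)) * (\<integral>\<^sup>+ w\<in>{t..1}. F w \<partial>lborel)"

lemma TM_val: "TM_norm \<phi> X = (SUP t\<in>{0<..<1}. val \<phi> (rearr X) t)"
  unfolding TM_norm_def val_def ..

lemma rearr_cong: "(\<And>l. DF X l = DF Y l) \<Longrightarrow> rearr X = rearr Y"
  unfolding rearr_def DF_def by simp

lemma DF_AE: assumes "X \<in> Mplus" "Y \<in> Mplus" "AE x in Om. X x = Y x" shows "DF X l = DF Y l"
  unfolding DF_def
proof (rule emeasure_eq_AE)
  show "AE x in Om. (x \<in> {x \<in> space Om. l < X x}) = (x \<in> {x \<in> space Om. l < Y x})"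
    using assms(3) by eventually_elim auto
qed (use DF_sets assms in blast)+

lemma split_01:
  fixes F :: "real \<Rightarrow> ennreal"
  assumes F: "F \<in> borel_measurable borel" and t: "0 \<le> t" "t \<le> 1"
  shows "(\<integral>\<^sup>+w\<in>{0..1}. F w \<partial>lborel) = (\<integral>\<^sup>+w\<in>{0..t}. F w \<partial>lborel) + (\<integral>\<^sup>+w\<in>{t..1}. F w \<partial>lborel)"
proof -
  have "(\<integral>\<^sup>+w\<in>{0..1}. F w \<partial>lborel) = (\<integral>\<^sup>+w. F w * indicator {0..t} w + F w * indicator {t..1} w \<partial>lborel)"
  proof (rule nn_integral_cong_AE)
    show "AE w in lborel. F w * indicator {0..1} w = F w * indicator {0..t} w + F w * indicator {t..1} w"
      using AE_lborel_singleton[of t]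
    proof eventually_elim
      fix w :: real assume "w \<noteq> t"
      then have "indicator {0..1} w = (indicator {0..t} w + indicator {t..1} w :: ennreal)"
        using t by (auto simp: indicator_def)
      then show "F w * indicator {0..1} w = F w * indicator {0..t} w + F w * indicator {t..1} w"
        by (simp add: distrib_left)
    qed
  qed
  also have "\<dots> = (\<integral>\<^sup>+w\<in>{0..t}. F w \<partial>lborel) + (\<integral>\<^sup>+w\<in>{t..1}. F w \<partial>lborel)"
    using F by (intro nn_integral_add) auto
  finally show ?thesis .
qed

lemma int_ge_const:
  fixes F :: "real \<Rightarrow> ennreal"
  assumes F: "F \<in> borel_measurable borel" and ge: "\<And>w. w \<in> {a..b} \<Longrightarrow> c \<le> F w" and ab: "a \<le> b"
  shows "c * ennreal (b - a) \<le> (\<integral>\<^sup>+w\<in>{a..b}. F w \<partial>lborel)"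
proof -
  have "c * ennreal (b - a) = (\<integral>\<^sup>+w. c * indicator {a..b} w \<partial>lborel)"
    using ab by (simp add: nn_integral_cmult_indicator)
  also have "\<dots> \<le> (\<integral>\<^sup>+w\<in>{a..b}. F w \<partial>lborel)"
    by (intro nn_integral_mono) (auto simp: indicator_def ge)
  finally show ?thesis .
qed

lemma int_le_const:
  fixes F :: "real \<Rightarrow> ennreal"
  assumes F: "F \<in> borel_measurable borel" and le: "\<And>w. w \<in> {a..b} \<Longrightarrow> F w \<le> c" and ab: "a \<le> b"
  shows "(\<integral>\<^sup>+w\<in>{a..b}. F w \<partial>lborel) \<le> c * ennreal (b - a)"
proof -
  have "(\<integral>\<^sup>+w\<in>{a..b}. F w \<partial>lborel) \<le> (\<integral>\<^sup>+w. c * indicator {a..b} w \<partial>lborel)"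
    by (intro nn_integral_mono) (auto simp: indicator_def le)
  also have "\<dots> = c * ennreal (b - a)"
    using ab by (simp add: nn_integral_cmult_indicator)
  finally show ?thesis .
qed

lemma val_ge_total:
  fixes F :: "real \<Rightarrow> ennreal"
  assumes p: "phiok \<phi>" and F: "F \<in> borel_measurable borel" and am: "antimono F"
    and t: "0 < t" "t < 1"
  shows "(\<integral>\<^sup>+w\<in>{0..1}. F w \<partial>lborel) \<le> val \<phi> F t"
proof -
  define I1 where "I1 = (\<integral>\<^sup>+w\<in>{0..t}. F w \<partial>lborel)"
  define I2 where "I2 = (\<integral>\<^sup>+w\<in>{t..1}. F w \<partial>lborel)"
  define a where "a = \<phi> t / t"
  define b where "b = (\<phi> t - 1) / (t - 1)"
  have ph: "t \<le> \<phi> t" "\<phi> t \<le> 1" using phi_ge[OF p] phi_range[OF p] t by auto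
  have a_eq: "a = 1 + (\<phi> t - t) / t" using t by (simp add: a_def field_simps)
  have b_eq: "b = 1 - (\<phi> t - t) / (1 - t)" using t by (simp add: b_def field_simps)
  have a0: "0 < a" using t ph by (simp add: a_def)
  have b0: "0 \<le> b" using t ph by (simp add: b_def divide_nonpos_neg)
  have tot: "(\<integral>\<^sup>+w\<in>{0..1}. F w \<partial>lborel) = I1 + I2"
    unfolding I1_def I2_def using t by (intro split_01 F) auto
  have vv: "val \<phi> F t = ennreal a * I1 + ennreal b * I2"
    unfolding val_def I1_def I2_def a_def b_def ..
  have I1ge: "F t * ennreal t \<le> I1" unfolding I1_def
    using int_ge_const[OF F, of 0 t "F t"] am t by (auto simp: antimono_def)
  have I2le: "I2 \<le> F t * ennreal (1 - t)" unfolding I2_def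
    using int_le_const[OF F, of t 1 "F t"] am t by (auto simp: antimono_def)
  show ?thesis
  proof (cases "I1 = top")
    case True
    then have "ennreal a * I1 = top" using a0 by (simp add: ennreal_mult_top)
    then show ?thesis unfolding vv by simp
  next
    case False
    then obtain i1 where i1: "I1 = ennreal i1" "0 \<le> i1" by (cases I1) auto
    have "F t \<noteq> top"
    proof
      assume "F t = top"
      then have "F t * ennreal t = top" using t by (simp add: ennreal_top_mult)
      with I1ge False show False by (simp add: top_unique)
    qed
    then obtain c where c: "F t = ennreal c" "0 \<le> c" by (cases "F t") auto
    have "I2 \<noteq> top" using I2le c by (auto simp: top_unique ennreal_mult_eq_top_iff simp flip: ennreal_mult)
    then obtain i2 where i2: "I2 = ennreal i2" "0 \<le> i2" by (cases I2) auto
    have h1: "c * t \<le> i1" using I1ge c i1 t by (simp add: ennreal_mult[symmetric] ennreal_le_iff)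
    have h2: "i2 \<le> c * (1 - t)" using I2le c i2 t by (simp add: ennreal_mult[symmetric] ennreal_le_iff)
    have k1: "(\<phi> t - t) / t * (c * t) \<le> (\<phi> t - t) / t * i1"
      using h1 ph t by (intro mult_left_mono) auto
    have k2: "(\<phi> t - t) / (1 - t) * i2 \<le> (\<phi> t - t) / (1 - t) * (c * (1 - t))"
      using h2 ph t by (intro mult_left_mono) auto
    have k3: "(\<phi> t - t) / t * (c * t) = (\<phi> t - t) * c" "(\<phi> t - t) / (1 - t) * (c * (1 - t)) = (\<phi> t - t) * c"
      using t by (auto simp: field_simps)
    have "i1 + i2 \<le> a * i1 + b * i2"
      unfolding a_eq b_eq using k1 k2 k3 by (simp add: algebra_simps)
    then have "ennreal (i1 + i2) \<le> ennreal (a * i1 + b * i2)" by (rule ennreal_leI)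
    then show ?thesis unfolding tot vv i1 i2
      using a0 b0 i1 i2 by (simp add: ennreal_mult[symmetric] ennreal_plus[symmetric] del: ennreal_plus)
  qed
qed

lemma rearr_antimono': "antimono (rearr X)"
  by (intro antimonoI rearr_antimono)

lemma TM_DF_cong: "(\<And>l. DF X l = DF Y l) \<Longrightarrow> TM_norm \<phi> X = TM_norm \<phi> Y"
  using rearr_cong[of X Y] by (simp add: TM_val)

lemma DF_distr_fun:
  assumes "\<forall>l::real. l \<ge> 0 \<longrightarrow> distr_fun X l = distr_fun Y l"
  shows "DF X l = DF Y l"
proof (cases l)
  case (real r)
  then show ?thesis using assms unfolding distr_fun_def DF_def by auto
next
  case top
  then show ?thesis by (simp add: DF_top)
qed

lemma TM_ri: "rearrangement_invariant (TM_norm \<phi>)"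
  unfolding rearrangement_invariant_def using DF_distr_fun TM_DF_cong by blast

lemma int_Om_le_TM:
  assumes p: "phiok \<phi>" and X: "X \<in> Mplus"
  shows "(\<integral>\<^sup>+x. X x \<partial>Om) = (\<integral>\<^sup>+w\<in>{0..1}. rearr X w \<partial>lborel)"
    and "(\<integral>\<^sup>+w\<in>{0..1}. rearr X w \<partial>lborel) \<le> TM_norm \<phi> X"
proof -
  show "(\<integral>\<^sup>+x. X x \<partial>Om) = (\<integral>\<^sup>+w\<in>{0..1}. rearr X w \<partial>lborel)"
    using nn_integral_rearr[OF X, of "\<lambda>x. x"] by simp
  have "(\<integral>\<^sup>+w\<in>{0..1}. rearr X w \<partial>lborel) \<le> val \<phi> (rearr X) (1/2)"
    by (intro val_ge_total p rearr_meas X rearr_antimono') auto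
  also have "\<dots> \<le> TM_norm \<phi> X" unfolding TM_val by (intro SUP_upper) auto
  finally show "(\<integral>\<^sup>+w\<in>{0..1}. rearr X w \<partial>lborel) \<le> TM_norm \<phi> X" .
qed

lemma M_le_TM:
  assumes p: "phiok \<phi>" and X: "X \<in> Mplus"
  shows "M_norm \<phi> X \<le> TM_norm \<phi> X"
  unfolding M_norm_def
proof (rule SUP_least)
  fix t :: real assume t: "t \<in> {0<..1}"
  show "ennreal (\<phi> t / t) * (\<integral>\<^sup>+ w\<in>{0..t}. rearr X w \<partial>lborel) \<le> TM_norm \<phi> X"
  proof (cases "t = 1")
    case True
    have "\<phi> 1 = 1" using p unfolding phiok_def by auto
    then show ?thesis using True int_Om_le_TM(2)[OF p X] by simp
  next
    case False
    then have "ennreal (\<phi> t / t) * (\<integral>\<^sup>+ w\<in>{0..t}. rearr X w \<partial>lborel) \<le> val \<phi> (rearr X) t"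
      unfolding val_def by simp
    also have "\<dots> \<le> TM_norm \<phi> X" unfolding TM_val using t False by (intro SUP_upper) auto
    finally show ?thesis .
  qed
qed

lemma ennreal_eqI_less: "(\<And>l::ennreal. l < a \<longleftrightarrow> l < b) \<Longrightarrow> a = b"
  by (metis linorder_neqE less_irrefl)

lemma measure_Om_range: "0 \<le> measure Om E \<and> measure Om E \<le> 1"
proof -
  have "measure Om E \<le> measure Om (space Om)"
    by (rule finite_measure.bounded_measure[OF finite_Om])
  moreover have "measure Om (space Om) = 1" using emeasure_Om_space by (simp add: measure_def)
  ultimately show ?thesis by simp
qed

lemma rearr_ind:
  assumes E: "E \<in> sets Om" and w: "0 \<le> w"
  shows "rearr (indicator E) w = indicator {..<measure Om E} w"
proof -
  define s where "s = measure Om E"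
  have Em: "emeasure Om E = ennreal s"
    unfolding s_def by (rule finite_measure.emeasure_eq_measure[OF finite_Om])
  have I: "indicator E \<in> Mplus" unfolding Mplus_def using E by simp
  have Es: "E \<subseteq> {0..1}" using sets.sets_into_space[OF E] by simp
  have DFi: "DF (indicator E) l = (if l < 1 then ennreal s else 0)" for l
  proof (cases "l < 1")
    case True
    then have "{x \<in> space Om. l < indicator E x} = E" using Es by (auto simp: indicator_def)
    then show ?thesis using True Em unfolding DF_def by simp
  next
    case False
    then have eq: "{x \<in> space Om. l < indicator E x} = {}" by (auto simp: indicator_def not_less intro: order_trans)
    show ?thesis using False unfolding DF_def eq by simp
  qed
  show ?thesis unfolding s_def[symmetric]
  proof (rule ennreal_eqI_less)
    fix l :: ennreal
    show "l < rearr (indicator E) w \<longleftrightarrow> l < indicator {..<s} w"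
      unfolding less_rearr_iff[OF I] DFi using w by (auto simp: indicator_def ennreal_less_iff)
  qed
qed

lemma int_rearr_ind:
  assumes E: "E \<in> sets Om" and ab: "0 \<le> a"
  shows "(\<integral>\<^sup>+w\<in>{a..b}. rearr (indicator E) w \<partial>lborel) = emeasure lborel ({a..b} \<inter> {..<measure Om E})"
proof -
  have "(\<integral>\<^sup>+w\<in>{a..b}. rearr (indicator E) w \<partial>lborel) = (\<integral>\<^sup>+w. indicator ({a..b} \<inter> {..<measure Om E}) w \<partial>lborel)"
    by (intro nn_integral_cong) (use ab rearr_ind[OF E] in \<open>auto simp: indicator_def\<close>)
  also have "\<dots> = emeasure lborel ({a..b} \<inter> {..<measure Om E})" by simp
  finally show ?thesis .
qed

lemma TM_ind:
  assumes p: "phiok \<phi>" and E: "E \<in> sets Om"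
  shows "TM_norm \<phi> (indicator E) = ennreal (\<phi> (measure Om E))"
proof -
  define s where "s = measure Om E"
  have s: "0 \<le> s" "s \<le> 1" using measure_Om_range unfolding s_def by auto
  have v: "val \<phi> (rearr (indicator E)) t =
      (if s \<le> t then ennreal (\<phi> t / t * s) else ennreal (\<phi> t + (\<phi> t - 1) / (t - 1) * (s - t)))"
    if t: "0 < t" "t < 1" for t
  proof -
    have ph: "t \<le> \<phi> t" "\<phi> t \<le> 1" using phi_ge[OF p] phi_range[OF p] t by auto
    have b0: "0 \<le> (\<phi> t - 1) / (t - 1)" using t ph by (simp add: divide_nonpos_neg)
    have a0: "0 \<le> \<phi> t / t" using t ph by simp
    show ?thesis
    proof (cases "s \<le> t")
      case True
      have "{0..t} \<inter> {..<s} = {0..<s}" "{t..1} \<inter> {..<s} = {}" using True s by auto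
      then show ?thesis unfolding val_def using True s t a0
        by (simp add: int_rearr_ind[OF E] s_def[symmetric] ennreal_mult[symmetric])
    next
      case False
      have "{0..t} \<inter> {..<s} = {0..t}" "{t..1} \<inter> {..<s} = {t..<s}" using False s by auto
      moreover have nn: "0 \<le> (\<phi> t - 1) * (s - t) / (t - 1)"
        using mult_nonneg_nonneg[OF b0, of "s-t"] False by simp
      moreover have "0 \<le> \<phi> t" using ph t by simp
      ultimately show ?thesis unfolding val_def using False s t a0 b0
        by (simp add: int_rearr_ind[OF E] s_def[symmetric] ennreal_mult[symmetric] ennreal_plus[symmetric]
            del: ennreal_plus)
    qed
  qed
  have le: "val \<phi> (rearr (indicator E)) t \<le> ennreal (\<phi> s)" if t: "t \<in> {0<..<1}" for t
  proof (cases "s \<le> t")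
    case True
    then show ?thesis using v t phi_chord0[OF p, of s t] s by (auto intro!: ennreal_leI)
  next
    case False
    then show ?thesis using v t phi_chord1[OF p, of t s] s by (auto intro!: ennreal_leI)
  qed
  have ge: "ennreal (\<phi> s) \<le> (SUP t\<in>{0<..<1}. val \<phi> (rearr (indicator E)) t)"
  proof -
    consider "s = 0" | "0 < s" "s < 1" | "s = 1" using s by linarith
    then show ?thesis
    proof cases
      case 1
      then have "\<phi> s = 0" using p unfolding phiok_def by auto
      then show ?thesis by simp
    next
      case 2
      have "ennreal (\<phi> s) = val \<phi> (rearr (indicator E)) s" using v[of s] 2 by simp
      also have "\<dots> \<le> (SUP t\<in>{0<..<1}. val \<phi> (rearr (indicator E)) t)" using 2 by (intro SUP_upper) auto
      finally show ?thesis .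
    next
      case 3
      have p1: "\<phi> 1 = 1" using p unfolding phiok_def by auto
      have "\<phi> (1/2) + (\<phi> (1/2) - 1) / (1/2 - 1) * (1 - 1/2) = 1" by (simp add: field_simps)
      then have "ennreal (\<phi> s) = val \<phi> (rearr (indicator E)) (1/2)" using v[of "1/2"] 3 p1 by simp
      also have "\<dots> \<le> (SUP t\<in>{0<..<1}. val \<phi> (rearr (indicator E)) t)" by (intro SUP_upper) auto
      finally show ?thesis .
    qed
  qed
  show ?thesis unfolding TM_val s_def[symmetric]
    by (intro antisym SUP_least le ge) auto
qed

lemma shift_less:
  assumes "0 \<le> c" "c \<le> r"
  shows "ennreal r < a + ennreal c \<longleftrightarrow> ennreal (r - c) < a"
proof (cases a)
  case (real y)
  then show ?thesis using assms
    by (simp add: ennreal_less_iff del: ennreal_plus add: ennreal_plus[symmetric]) linarith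
next
  case top
  then show ?thesis by simp
qed

lemma Mplus_shift: "X \<in> Mplus \<Longrightarrow> (\<lambda>x. X x + ennreal c) \<in> Mplus"
  unfolding Mplus_def by (intro borel_measurable_add) auto

lemma rearr_shift:
  assumes X: "X \<in> Mplus" and c: "0 \<le> c" and w: "0 \<le> w" "w < 1"
  shows "rearr (\<lambda>x. X x + ennreal c) w = rearr X w + ennreal c"
proof (rule ennreal_eqI_less)
  fix l :: ennreal
  have Y: "(\<lambda>x. X x + ennreal c) \<in> Mplus" using Mplus_shift[OF X] .
  show "l < rearr (\<lambda>x. X x + ennreal c) w \<longleftrightarrow> l < rearr X w + ennreal c"
  proof (cases "l < ennreal c")
    case True
    have "{x \<in> space Om. l < X x + ennreal c} = space Om"
      using True by (auto intro: less_le_trans add_increasing)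
    then have "DF (\<lambda>x. X x + ennreal c) l = 1" unfolding DF_def using emeasure_Om_space by simp
    moreover have "l < rearr X w + ennreal c" using True by (auto intro: less_le_trans add_increasing)
    ultimately show ?thesis unfolding less_rearr_iff[OF Y] using w by (simp add: ennreal_less_iff)
  next
    case False
    show ?thesis
    proof (cases l)
      case top
      then show ?thesis by simp
    next
      case (real r)
      then have rc: "c \<le> r" using False c by (simp add: ennreal_less_iff)
      have "{x \<in> space Om. l < X x + ennreal c} = {x \<in> space Om. ennreal (r - c) < X x}"
        using shift_less[OF c rc] real by auto
      then have "DF (\<lambda>x. X x + ennreal c) l = DF X (ennreal (r - c))" unfolding DF_def by simp
      then show ?thesis unfolding less_rearr_iff[OF Y] real shift_less[OF c rc] less_rearr_iff[OF X]
        by simp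
    qed
  qed
qed

lemma int_shift:
  fixes F G :: "real \<Rightarrow> ennreal"
  assumes F: "F \<in> borel_measurable borel" and ab: "0 \<le> a" "a \<le> b" "b \<le> 1"
    and eq: "\<And>w. 0 \<le> w \<Longrightarrow> w < 1 \<Longrightarrow> G w = F w + ennreal c"
  shows "(\<integral>\<^sup>+w\<in>{a..b}. G w \<partial>lborel) = (\<integral>\<^sup>+w\<in>{a..b}. F w \<partial>lborel) + ennreal c * ennreal (b - a)"
proof -
  have "(\<integral>\<^sup>+w\<in>{a..b}. G w \<partial>lborel) = (\<integral>\<^sup>+w. F w * indicator {a..b} w + ennreal c * indicator {a..b} w \<partial>lborel)"
  proof (rule nn_integral_cong_AE)
    show "AE w in lborel. G w * indicator {a..b} w = F w * indicator {a..b} w + ennreal c * indicator {a..b} w"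
      using AE_lborel_singleton[of 1]
    proof eventually_elim
      fix w :: real assume "w \<noteq> 1"
      then show "G w * indicator {a..b} w = F w * indicator {a..b} w + ennreal c * indicator {a..b} w"
        using ab eq[of w] by (auto simp: indicator_def)
    qed
  qed
  also have "\<dots> = (\<integral>\<^sup>+w\<in>{a..b}. F w \<partial>lborel) + ennreal c * ennreal (b - a)"
    using F ab by (subst nn_integral_add) (auto simp: nn_integral_cmult_indicator)
  finally show ?thesis .
qed

lemma val_shift:
  assumes p: "phiok \<phi>" and X: "X \<in> Mplus" and c: "0 \<le> c" and t: "0 < t" "t < 1"
  shows "val \<phi> (rearr (\<lambda>x. X x + ennreal c)) t = val \<phi> (rearr X) t + ennreal c"
proof -
  define a where "a = \<phi> t / t"
  define b where "b = (\<phi> t - 1) / (t - 1)"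
  have ph: "t \<le> \<phi> t" "\<phi> t \<le> 1" using phi_ge[OF p] phi_range[OF p] t by auto
  have a0: "0 \<le> a" using t ph by (simp add: a_def)
  have b0: "0 \<le> b" using t ph by (simp add: b_def divide_nonpos_neg)
  have at: "a * t = \<phi> t" using t by (simp add: a_def)
  have bt: "b * (1 - t) = 1 - \<phi> t"
    using t by (simp add: b_def field_simps)
  have I1: "(\<integral>\<^sup>+w\<in>{0..t}. rearr (\<lambda>x. X x + ennreal c) w \<partial>lborel) = (\<integral>\<^sup>+w\<in>{0..t}. rearr X w \<partial>lborel) + ennreal c * ennreal t"
    using int_shift[OF rearr_meas[OF X], of 0 t "rearr (\<lambda>x. X x + ennreal c)" c] rearr_shift[OF X c] t by simp
  have I2: "(\<integral>\<^sup>+w\<in>{t..1}. rearr (\<lambda>x. X x + ennreal c) w \<partial>lborel) = (\<integral>\<^sup>+w\<in>{t..1}. rearr X w \<partial>lborel) + ennreal c * ennreal (1 - t)"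
    using int_shift[OF rearr_meas[OF X], of t 1 "rearr (\<lambda>x. X x + ennreal c)" c] rearr_shift[OF X c] t by simp
  have e: "ennreal a * (ennreal c * ennreal t) + ennreal b * (ennreal c * ennreal (1 - t)) = ennreal c"
  proof -
    have "ennreal a * (ennreal c * ennreal t) + ennreal b * (ennreal c * ennreal (1 - t))
        = ennreal (c * (a * t) + c * (b * (1 - t)))"
      using a0 b0 c t by (simp add: ennreal_mult[symmetric] ennreal_plus[symmetric] mult_ac del: ennreal_plus)
    also have "\<dots> = ennreal c" unfolding at bt by (simp add: algebra_simps)
    finally show ?thesis .
  qed
  show ?thesis unfolding val_def I1 I2 a_def[symmetric] b_def[symmetric]
    using e by (simp add: distrib_left add_ac)
qed

lemma TM_shift:
  assumes p: "phiok \<phi>" and X: "X \<in> Mplus" and c: "0 \<le> c"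
  shows "TM_norm \<phi> (\<lambda>x. X x + ennreal c) = TM_norm \<phi> X + ennreal c"
  unfolding TM_val using val_shift[OF p X c]
  by (simp add: ennreal_SUP_add_left[symmetric])

lemma TM_PTE: assumes p: "phiok \<phi>" shows "PTE (TM_norm \<phi>)"
  unfolding PTE_def
proof (intro conjI ballI allI impI)
  fix X c assume "X \<in> Mplus" "0 \<le> (c::real)"
  then show "TM_norm \<phi> (\<lambda>x. X x + ennreal c) = TM_norm \<phi> X + ennreal c" by (rule TM_shift[OF p])
next
  fix X d assume X: "X \<in> Mplus" and d: "0 \<le> (d::real)" and ae: "AE x in Om. ennreal d \<le> X x"
  define Y where "Y = (\<lambda>x. X x - ennreal d)"
  have Y: "Y \<in> Mplus" using X unfolding Y_def Mplus_def by measurable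
  have "AE x in Om. X x = Y x + ennreal d"
    using ae by eventually_elim (simp add: Y_def diff_add_cancel_ennreal)
  then have "TM_norm \<phi> X = TM_norm \<phi> (\<lambda>x. Y x + ennreal d)"
    by (intro TM_DF_cong DF_AE X Mplus_shift Y)
  also have "\<dots> = TM_norm \<phi> Y + ennreal d" by (rule TM_shift[OF p Y d])
  finally show "TM_norm \<phi> (\<lambda>x. X x - ennreal d) = TM_norm \<phi> X - ennreal d"
    unfolding Y_def[symmetric] by simp
qed

lemma rearr_zero: "rearr (\<lambda>x. 0) w = 0"
proof -
  have "DF (\<lambda>x. 0) 0 = 0" unfolding DF_def by simp
  then have "rearr (\<lambda>x. 0) w \<le> 0" by (intro rearr_le) simp
  then show ?thesis by simp
qed

lemma TM_zero: "TM_norm \<phi> (\<lambda>x. 0) = 0"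
  unfolding TM_val val_def rearr_zero by simp

lemma rearr_cmult:
  assumes X: "X \<in> Mplus" and c: "0 < c"
  shows "rearr (\<lambda>x. ennreal c * X x) w = ennreal c * rearr X w"
proof (rule ennreal_eqI_less)
  fix l :: ennreal
  have Y: "(\<lambda>x. ennreal c * X x) \<in> Mplus" using X unfolding Mplus_def by (intro borel_measurable_times_ennreal) auto
  have c0: "ennreal c \<noteq> 0" "ennreal c < top" using c by auto
  have "{x \<in> space Om. l < ennreal c * X x} = {x \<in> space Om. l / ennreal c < X x}"
    using divide_less_ennreal[OF c0] by (auto simp: mult.commute)
  then have "DF (\<lambda>x. ennreal c * X x) l = DF X (l / ennreal c)" unfolding DF_def by simp
  then show "l < rearr (\<lambda>x. ennreal c * X x) w \<longleftrightarrow> l < ennreal c * rearr X w"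
    unfolding less_rearr_iff[OF Y] using less_rearr_iff[OF X, of "l / ennreal c" w] divide_less_ennreal[OF c0]
    by (simp add: mult.commute)
qed

lemma TM_cmult:
  assumes X: "X \<in> Mplus" and c: "0 \<le> c"
  shows "TM_norm \<phi> (\<lambda>x. ennreal c * X x) = ennreal c * TM_norm \<phi> X"
proof (cases "c = 0")
  case True
  then show ?thesis using TM_zero by simp
next
  case False
  then have c: "0 < c" using c by simp
  have "val \<phi> (rearr (\<lambda>x. ennreal c * X x)) t = ennreal c * val \<phi> (rearr X) t" for t
  proof -
    have "(\<integral>\<^sup>+w\<in>A. rearr (\<lambda>x. ennreal c * X x) w \<partial>lborel) = ennreal c * (\<integral>\<^sup>+w\<in>A. rearr X w \<partial>lborel)"
      if "A \<in> sets borel" for A :: "real set"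
      unfolding rearr_cmult[OF X c] using rearr_meas[OF X] that
      by (subst nn_integral_cmult[symmetric]) (auto simp: mult.assoc)
    then show ?thesis unfolding val_def by (simp add: distrib_left mult_ac)
  qed
  then show ?thesis unfolding TM_val by (simp add: SUP_mult_left_ennreal)
qed

lemma rearr_mono_DF: "(\<And>l. DF X l \<le> DF Y l) \<Longrightarrow> rearr X w \<le> rearr Y w"
  unfolding rearr_def DF_def by (intro Inf_superset_mono) (auto intro: order_trans)

lemma val_mono:
  fixes F G :: "real \<Rightarrow> ennreal"
  assumes "\<And>w. F w \<le> G w"
  shows "val \<phi> F t \<le> val \<phi> G t"
  unfolding val_def using assms
  by (intro add_mono mult_left_mono nn_integral_mono) (auto intro: mult_right_mono)

lemma TM_mono:
  assumes X: "X \<in> Mplus" and Y: "Y \<in> Mplus" and ae: "AE x in Om. X x \<le> Y x"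
  shows "TM_norm \<phi> X \<le> TM_norm \<phi> Y"
proof -
  have "DF X l \<le> DF Y l" for l unfolding DF_def
    by (rule emeasure_mono_AE) (use ae DF_sets[OF Y] in \<open>auto elim: eventually_mono intro: less_le_trans\<close>)
  then have "rearr X w \<le> rearr Y w" for w by (rule rearr_mono_DF)
  then show ?thesis unfolding TM_val by (intro SUP_mono' val_mono)
qed

lemma TM_null:
  assumes p: "phiok \<phi>" and X: "X \<in> Mplus"
  shows "TM_norm \<phi> X = 0 \<longleftrightarrow> (AE x in Om. X x = 0)"
proof
  assume "TM_norm \<phi> X = 0"
  then have "(\<integral>\<^sup>+x. X x \<partial>Om) = 0" using int_Om_le_TM[OF p X] by simp
  then show "AE x in Om. X x = 0" using X unfolding Mplus_def by (simp add: nn_integral_0_iff_AE)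
next
  assume "AE x in Om. X x = 0"
  then have "TM_norm \<phi> X = TM_norm \<phi> (\<lambda>x. 0)"
    by (intro TM_DF_cong DF_AE X) (auto simp: Mplus_def)
  then show "TM_norm \<phi> X = 0" by (simp add: TM_zero)
qed

lemma TM_cE:
  assumes p: "phiok \<phi>" and E: "E \<in> sets Om"
  shows "TM_norm \<phi> (indicator E) < \<infinity> \<and>
        (\<exists>c::real. 0 < c \<and> (\<forall>X\<in>Mplus. (\<integral>\<^sup>+ x\<in>E. X x \<partial>Om) \<le> ennreal c * TM_norm \<phi> X))"
proof
  show "TM_norm \<phi> (indicator E) < \<infinity>" using TM_ind[OF p E] by simp
  show "\<exists>c::real. 0 < c \<and> (\<forall>X\<in>Mplus. (\<integral>\<^sup>+ x\<in>E. X x \<partial>Om) \<le> ennreal c * TM_norm \<phi> X)"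
  proof (intro exI[of _ 1] conjI ballI)
    fix X assume X: "X \<in> Mplus"
    have "(\<integral>\<^sup>+ x\<in>E. X x \<partial>Om) \<le> (\<integral>\<^sup>+ x. X x \<partial>Om)"
      by (intro nn_integral_mono) (auto simp: indicator_def)
    also have "\<dots> \<le> TM_norm \<phi> X" using int_Om_le_TM[OF p X] by simp
    finally show "(\<integral>\<^sup>+ x\<in>E. X x \<partial>Om) \<le> ennreal 1 * TM_norm \<phi> X" by simp
  qed simp
qed

lemma TM_norm1:
  assumes p: "phiok \<phi>" shows "TM_norm \<phi> (indicator (space Om)) = 1"
proof -
  have "measure Om (space Om) = 1" using emeasure_Om_space by (simp add: measure_def)
  moreover have "\<phi> 1 = 1" using p unfolding phiok_def by auto
  ultimately show ?thesis using TM_ind[OF p, of "space Om"] by simp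
qed

lemma Mplus_SUP: fixes Xs :: "nat \<Rightarrow> real \<Rightarrow> ennreal" shows "(\<And>n. Xs n \<in> Mplus) \<Longrightarrow> (\<lambda>x. SUP n. Xs n x) \<in> Mplus"
  unfolding Mplus_def by (intro borel_measurable_SUP) auto

lemma DF_SUP:
  fixes Xs :: "nat \<Rightarrow> real \<Rightarrow> ennreal"
  assumes Xs: "\<And>n. Xs n \<in> Mplus" and inc: "\<And>x. incseq (\<lambda>n. Xs n x)"
  shows "DF (\<lambda>x. SUP n. Xs n x) l = (SUP n. DF (Xs n) l)"
proof -
  define A where "A n = {x \<in> space Om. l < Xs n x}" for n
  have Ain: "range A \<subseteq> sets Om" unfolding A_def using DF_sets[OF Xs] by auto
  have incA: "incseq A" unfolding A_def incseq_def
    using inc by (auto simp: incseq_def intro: less_le_trans)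
  have U: "(\<Union>n. A n) = {x \<in> space Om. l < (SUP n. Xs n x)}"
    unfolding A_def by (auto simp: less_SUP_iff)
  show ?thesis unfolding DF_def using SUP_emeasure_incseq[OF Ain incA] U A_def by simp
qed

lemma rearr_SUP:
  fixes Xs :: "nat \<Rightarrow> real \<Rightarrow> ennreal"
  assumes Xs: "\<And>n. Xs n \<in> Mplus" and inc: "\<And>x. incseq (\<lambda>n. Xs n x)"
  shows "rearr (\<lambda>x. SUP n. Xs n x) w = (SUP n. rearr (Xs n) w)"
proof (rule antisym)
  define X where "X = (\<lambda>x. SUP n. Xs n x)"
  have X: "X \<in> Mplus" unfolding X_def by (rule Mplus_SUP[OF Xs])
  show "(SUP n. rearr (Xs n) w) \<le> rearr (\<lambda>x. SUP n. Xs n x) w"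
  proof (rule SUP_least)
    fix n
    have "DF (Xs n) l \<le> DF X l" for l
      unfolding DF_def X_def by (intro emeasure_mono DF_sets[OF X, unfolded X_def])
        (auto simp: less_SUP_iff)
    then show "rearr (Xs n) w \<le> rearr (\<lambda>x. SUP n. Xs n x) w" unfolding X_def[symmetric] by (rule rearr_mono_DF)
  qed
  show "rearr (\<lambda>x. SUP n. Xs n x) w \<le> (SUP n. rearr (Xs n) w)"
  proof (rule ccontr)
    assume "\<not> ?thesis"
    then have lt: "(SUP n. rearr (Xs n) w) < rearr X w" unfolding X_def by simp
    then obtain l where l: "(SUP n. rearr (Xs n) w) < l" "l < rearr X w" using dense by blast
    have "DF (Xs n) l \<le> ennreal w" for n
    proof -
      have "rearr (Xs n) w < l" using l(1) by (meson SUP_upper UNIV_I le_less_trans)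
      then obtain l' where l': "DF (Xs n) l' \<le> ennreal w" "l' < l"
        unfolding rearr_def DF_def by (auto simp: Inf_less_iff)
      have "DF (Xs n) l \<le> DF (Xs n) l'" using l' by (intro DF_antimono Xs) auto
      with l' show ?thesis by simp
    qed
    then have "DF X l \<le> ennreal w" unfolding X_def DF_SUP[OF Xs inc] by (rule SUP_least)
    then have "rearr X w \<le> l" by (rule rearr_le)
    with l show False by simp
  qed
qed

lemma int_SUP:
  fixes F :: "nat \<Rightarrow> real \<Rightarrow> ennreal"
  assumes F: "\<And>i. F i \<in> borel_measurable borel" and inc: "\<And>w. incseq (\<lambda>i. F i w)"
    and A: "A \<in> sets borel"
  shows "(\<integral>\<^sup>+w\<in>A. (SUP i. F i w) \<partial>lborel) = (SUP i. (\<integral>\<^sup>+w\<in>A. F i w \<partial>lborel))"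
proof -
  have "(\<integral>\<^sup>+w\<in>A. (SUP i. F i w) \<partial>lborel) = (\<integral>\<^sup>+w. (SUP i. F i w * indicator A w) \<partial>lborel)"
    by (simp add: SUP_mult_right_ennreal)
  also have "\<dots> = (SUP i. (\<integral>\<^sup>+w\<in>A. F i w \<partial>lborel))"
  proof (rule nn_integral_monotone_convergence_SUP)
    show "incseq (\<lambda>i w. F i w * indicator A w)"
      using inc by (auto simp: incseq_def le_fun_def intro: mult_right_mono)
    show "(\<lambda>w. F i w * indicator A w) \<in> borel_measurable lborel" for i
      using F[of i] A by (intro borel_measurable_times_ennreal) auto
  qed
  finally show ?thesis .
qed

lemma int_incseq:
  fixes F :: "nat \<Rightarrow> real \<Rightarrow> ennreal"
  assumes inc: "\<And>w. incseq (\<lambda>i. F i w)"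
  shows "incseq (\<lambda>i. (\<integral>\<^sup>+w\<in>A. F i w \<partial>lborel))"
  using inc by (auto simp: incseq_def intro!: nn_integral_mono mult_right_mono)

lemma val_SUP:
  fixes F :: "nat \<Rightarrow> real \<Rightarrow> ennreal"
  assumes F: "\<And>i. F i \<in> borel_measurable borel" and inc: "\<And>w. incseq (\<lambda>i. F i w)"
  shows "val \<phi> (\<lambda>w. SUP i. F i w) t = (SUP i. val \<phi> (F i) t)"
proof -
  have i1: "incseq (\<lambda>i. ennreal (\<phi> t / t) * (\<integral>\<^sup>+w\<in>{0..t}. F i w \<partial>lborel))"
    using int_incseq[OF inc, where A="{0..t}"] by (auto simp: incseq_def intro: mult_left_mono)
  have i2: "incseq (\<lambda>i. ennreal ((\<phi> t - 1) / (t - 1)) * (\<integral>\<^sup>+w\<in>{t..1}. F i w \<partial>lborel))"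
    using int_incseq[OF inc, where A="{t..1}"] by (auto simp: incseq_def intro: mult_left_mono)
  show ?thesis
    unfolding val_def int_SUP[OF F inc, of "{0..t}", simplified] int_SUP[OF F inc, of "{t..1}", simplified] SUP_mult_left_ennreal ennreal_SUP_add[OF i1 i2] ..
qed

lemma TM_incseq_SUP:
  fixes Xs :: "nat \<Rightarrow> real \<Rightarrow> ennreal"
  assumes Xs: "\<And>n. Xs n \<in> Mplus" and inc: "\<And>x. incseq (\<lambda>n. Xs n x)"
  shows "TM_norm \<phi> (\<lambda>x. SUP n. Xs n x) = (SUP n. TM_norm \<phi> (Xs n))"
proof -
  have rinc: "incseq (\<lambda>n. rearr (Xs n) w)" for w
  proof (rule incseq_SucI)
    fix n
    have "DF (Xs n) l \<le> DF (Xs (Suc n)) l" for l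
      unfolding DF_def by (intro emeasure_mono DF_sets[OF Xs])
        (use inc in \<open>auto simp: incseq_Suc_iff intro: less_le_trans\<close>)
    then show "rearr (Xs n) w \<le> rearr (Xs (Suc n)) w" by (rule rearr_mono_DF)
  qed
  have "val \<phi> (rearr (\<lambda>x. SUP n. Xs n x)) t = (SUP n. val \<phi> (rearr (Xs n)) t)" for t
  proof -
    have "rearr (\<lambda>x. SUP n. Xs n x) = (\<lambda>w. SUP n. rearr (Xs n) w)"
      using rearr_SUP[OF Xs inc] by auto
    then show ?thesis using val_SUP[OF rearr_meas[OF Xs] rinc] by simp
  qed
  then show ?thesis unfolding TM_val by (simp add: SUP_commute[of _ "{0<..<1}"])
qed

lemma TM_Fatou:
  fixes Xs :: "nat \<Rightarrow> real \<Rightarrow> ennreal"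
  assumes Xs: "\<forall>n. Xs n \<in> Mplus" and X: "X \<in> Mplus"
    and ae: "AE x in Om. incseq (\<lambda>n. Xs n x) \<and> (\<lambda>n. Xs n x) \<longlonglongrightarrow> X x"
  shows "(\<lambda>n. TM_norm \<phi> (Xs n)) \<longlonglongrightarrow> TM_norm \<phi> X"
proof -
  define Ys where "Ys n x = (SUP m\<in>{..n}. Xs m x)" for n x
  have Ys: "Ys n \<in> Mplus" for n
    using Xs unfolding Ys_def Mplus_def by (intro borel_measurable_SUP) auto
  have incY: "incseq (\<lambda>n. Ys n x)" for x
    unfolding Ys_def incseq_def by (auto intro!: SUP_subset_mono)
  have aeY: "AE x in Om. Ys n x = Xs n x" for n
    using ae
  proof eventually_elim
    case (elim x)
    then have "incseq (\<lambda>n. Xs n x)" by simp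
    then show "Ys n x = Xs n x" unfolding Ys_def
      by (intro antisym SUP_least) (auto simp: incseq_def intro: SUP_upper2[of n])
  qed
  have aeX: "AE x in Om. (SUP n. Ys n x) = X x"
  proof -
    have "AE x in Om. \<forall>n. Ys n x = Xs n x"
      by (subst AE_all_countable) (use aeY in auto)
    with ae show ?thesis
    proof eventually_elim
      case (elim x)
      then have "(SUP n. Xs n x) = X x" using LIMSEQ_SUP LIMSEQ_unique by blast
      then show ?case using elim by simp
    qed
  qed
  have TMeq: "TM_norm \<phi> (Xs n) = TM_norm \<phi> (Ys n)" for n
    using Xs Ys by (intro TM_DF_cong DF_AE) (auto intro: AE_mp[OF aeY[of n]])
  have TMX: "TM_norm \<phi> X = TM_norm \<phi> (\<lambda>x. SUP n. Ys n x)"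
    using X Mplus_SUP[OF Ys] by (intro TM_DF_cong DF_AE) (auto intro: AE_mp[OF aeX])
  have incT: "incseq (\<lambda>n. TM_norm \<phi> (Ys n))"
    using Ys incY by (auto simp: incseq_def intro!: TM_mono)
  show ?thesis unfolding TMeq TMX TM_incseq_SUP[OF Ys incY] by (rule LIMSEQ_SUP[OF incT])
qed

lemma le_add_diff_enn: "(a::ennreal) \<le> ennreal c + (a - ennreal c)"
proof (cases "ennreal c \<le> a")
  case True then show ?thesis by (simp add: add_diff_inverse_ennreal)
next
  case False then have "a \<le> ennreal c" by simp
  also have "\<dots> \<le> ennreal c + (a - ennreal c)" by (rule add_increasing2) auto
  finally show ?thesis .
qed

lemma add_diff_le_enn:
  assumes "0 \<le> c1" "0 \<le> c2"
  shows "(x::ennreal) + y - ennreal (c1 + c2) \<le> (x - ennreal c1) + (y - ennreal c2)"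
proof (cases x)
  case (real a)
  show ?thesis
  proof (cases y)
    case (real b)
    have "ennreal (a + b - (c1 + c2)) \<le> ennreal (max 0 (a - c1) + max 0 (b - c2))"
      by (intro ennreal_leI) auto
    also have "\<dots> = ennreal (a - c1) + ennreal (b - c2)"
      by (simp add: ennreal_max_0)
    finally show ?thesis using \<open>x = ennreal a\<close> real assms \<open>0 \<le> a\<close>
      by (smt (verit, best) ennreal_minus ennreal_plus)
  next
    case top
    then show ?thesis by simp
  qed
next
  case top
  then show ?thesis by simp
qed

lemma meas_diff: "X \<in> Mplus \<Longrightarrow> (\<lambda>x. X x - ennreal c) \<in> borel_measurable Om"
  unfolding Mplus_def by (intro borel_measurable_minus_ennreal) auto

lemma cvar_le:
  assumes X: "X \<in> Mplus" and t: "0 \<le> t" "t \<le> 1" and c: "0 \<le> c"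
  shows "(\<integral>\<^sup>+w\<in>{0..t}. rearr X w \<partial>lborel) \<le> ennreal c * ennreal t + (\<integral>\<^sup>+x. X x - ennreal c \<partial>Om)"
proof -
  have G: "(\<lambda>w. rearr X w - ennreal c) \<in> borel_measurable borel" using rearr_meas[OF X] by (intro borel_measurable_minus_ennreal) auto
  have "(\<integral>\<^sup>+w\<in>{0..t}. rearr X w \<partial>lborel) \<le> (\<integral>\<^sup>+w. ennreal c * indicator {0..t} w + (rearr X w - ennreal c) * indicator {0..t} w \<partial>lborel)"
    by (intro nn_integral_mono) (auto simp: indicator_def le_add_diff_enn)
  also have "\<dots> = ennreal c * ennreal t + (\<integral>\<^sup>+w\<in>{0..t}. rearr X w - ennreal c \<partial>lborel)"
    using G t by (subst nn_integral_add) (auto simp: nn_integral_cmult_indicator)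
  also have "(\<integral>\<^sup>+w\<in>{0..t}. rearr X w - ennreal c \<partial>lborel) \<le> (\<integral>\<^sup>+w\<in>{0..1}. rearr X w - ennreal c \<partial>lborel)"
    using t by (intro nn_integral_mono) (auto simp: indicator_def)
  also have "\<dots> = (\<integral>\<^sup>+x. X x - ennreal c \<partial>Om)"
    using nn_integral_rearr[OF X, of "\<lambda>x. x - ennreal c"] by simp
  finally show ?thesis by (simp add: add_left_mono)
qed

lemma cvar_eq:
  assumes X: "X \<in> Mplus" and t: "0 \<le> t" "t \<le> 1" and c: "0 \<le> c" and rc: "rearr X t = ennreal c"
  shows "(\<integral>\<^sup>+w\<in>{0..t}. rearr X w \<partial>lborel) = ennreal c * ennreal t + (\<integral>\<^sup>+x. X x - ennreal c \<partial>Om)"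
proof -
  have G: "(\<lambda>w. rearr X w - ennreal c) \<in> borel_measurable borel" using rearr_meas[OF X] by (intro borel_measurable_minus_ennreal) auto
  have "(\<integral>\<^sup>+w\<in>{0..t}. rearr X w \<partial>lborel) = (\<integral>\<^sup>+w. ennreal c * indicator {0..t} w + (rearr X w - ennreal c) * indicator {0..t} w \<partial>lborel)"
  proof (intro nn_integral_cong)
    fix w
    show "rearr X w * indicator {0..t} w = ennreal c * indicator {0..t} w + (rearr X w - ennreal c) * indicator {0..t} w"
    proof (cases "w \<in> {0..t}")
      case True
      then have "ennreal c \<le> rearr X w" using rc rearr_antimono[of w t X] by auto
      then show ?thesis using True by (simp add: add_diff_inverse_ennreal)
    qed simp
  qed
  also have "\<dots> = ennreal c * ennreal t + (\<integral>\<^sup>+w\<in>{0..t}. rearr X w - ennreal c \<partial>lborel)"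
    using G t by (subst nn_integral_add) (auto simp: nn_integral_cmult_indicator)
  also have "(\<integral>\<^sup>+w\<in>{0..t}. rearr X w - ennreal c \<partial>lborel) = (\<integral>\<^sup>+w\<in>{0..1}. rearr X w - ennreal c \<partial>lborel)"
  proof -
    have z: "(rearr X w - ennreal c) * indicator {t..1} w = 0" for w
    proof (cases "w \<in> {t..1}")
      case True
      then have "rearr X w \<le> ennreal c" using rc rearr_antimono[of t w X] by auto
      then show ?thesis using True by (simp add: diff_eq_0_iff_ennreal le_less_trans[OF _ ennreal_less_top])
    qed simp
    have "(\<integral>\<^sup>+w\<in>{t..1}. rearr X w - ennreal c \<partial>lborel) = (\<integral>\<^sup>+(w::real). 0 \<partial>lborel)"
      by (rule nn_integral_cong) (rule z)
    then have "(\<integral>\<^sup>+w\<in>{t..1}. rearr X w - ennreal c \<partial>lborel) = 0" by simp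
    then show ?thesis using split_01[OF G t] by simp
  qed
  also have "\<dots> = (\<integral>\<^sup>+x. X x - ennreal c \<partial>Om)"
    using nn_integral_rearr[OF X, of "\<lambda>x. x - ennreal c"] by simp
  finally show ?thesis .
qed

lemma rearr_t_finite:
  assumes X: "X \<in> Mplus" and t: "0 < t" "t \<le> 1" and fin: "(\<integral>\<^sup>+w\<in>{0..t}. rearr X w \<partial>lborel) \<noteq> top"
  shows "\<exists>c\<ge>0. rearr X t = ennreal c"
proof -
  have "rearr X t * ennreal (t - 0) \<le> (\<integral>\<^sup>+w\<in>{0..t}. rearr X w \<partial>lborel)"
    using t by (intro int_ge_const rearr_meas X) (auto intro: rearr_antimono)
  then have "rearr X t \<noteq> top" using fin t by (auto simp: ennreal_top_mult top_unique)
  then show ?thesis by (cases "rearr X t") auto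
qed

lemma HL:
  assumes X: "X \<in> Mplus" and Y: "Y \<in> Mplus" and t: "0 < t" "t \<le> 1"
  shows "(\<integral>\<^sup>+w\<in>{0..t}. rearr (\<lambda>x. X x + Y x) w \<partial>lborel)
    \<le> (\<integral>\<^sup>+w\<in>{0..t}. rearr X w \<partial>lborel) + (\<integral>\<^sup>+w\<in>{0..t}. rearr Y w \<partial>lborel)"
proof (cases "(\<integral>\<^sup>+w\<in>{0..t}. rearr X w \<partial>lborel) = top \<or> (\<integral>\<^sup>+w\<in>{0..t}. rearr Y w \<partial>lborel) = top")
  case True
  then show ?thesis by auto
next
  case False
  obtain c1 where c1: "0 \<le> c1" "rearr X t = ennreal c1" using rearr_t_finite[OF X t] False by auto
  obtain c2 where c2: "0 \<le> c2" "rearr Y t = ennreal c2" using rearr_t_finite[OF Y t] False by auto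
  have XY: "(\<lambda>x. X x + Y x) \<in> Mplus" using X Y unfolding Mplus_def by measurable
  have "(\<integral>\<^sup>+w\<in>{0..t}. rearr (\<lambda>x. X x + Y x) w \<partial>lborel)
      \<le> ennreal (c1 + c2) * ennreal t + (\<integral>\<^sup>+x. X x + Y x - ennreal (c1 + c2) \<partial>Om)"
    using c1 c2 t by (intro cvar_le XY) auto
  also have "(\<integral>\<^sup>+x. X x + Y x - ennreal (c1 + c2) \<partial>Om) \<le> (\<integral>\<^sup>+x. (X x - ennreal c1) + (Y x - ennreal c2) \<partial>Om)"
    using c1 c2 by (intro nn_integral_mono add_diff_le_enn) auto
  also have "\<dots> = (\<integral>\<^sup>+x. X x - ennreal c1 \<partial>Om) + (\<integral>\<^sup>+x. Y x - ennreal c2 \<partial>Om)"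
    using meas_diff[OF X] meas_diff[OF Y] by (intro nn_integral_add) auto
  also have "ennreal (c1 + c2) * ennreal t + ((\<integral>\<^sup>+x. X x - ennreal c1 \<partial>Om) + (\<integral>\<^sup>+x. Y x - ennreal c2 \<partial>Om))
      = (ennreal c1 * ennreal t + (\<integral>\<^sup>+x. X x - ennreal c1 \<partial>Om)) + (ennreal c2 * ennreal t + (\<integral>\<^sup>+x. Y x - ennreal c2 \<partial>Om))"
  proof -
    have "ennreal (c1 + c2) = ennreal c1 + ennreal c2" using c1 c2 by simp
    then show ?thesis by (simp add: distrib_right add_ac)
  qed
  also have "\<dots> = (\<integral>\<^sup>+w\<in>{0..t}. rearr X w \<partial>lborel) + (\<integral>\<^sup>+w\<in>{0..t}. rearr Y w \<partial>lborel)"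
    using cvar_eq[OF X _ _ c1] cvar_eq[OF Y _ _ c2] t by simp
  finally show ?thesis by (simp add: add_left_mono)
qed

lemma val_split:
  assumes p: "phiok \<phi>" and Z: "Z \<in> Mplus" and t: "0 < t" "t < 1"
  shows "val \<phi> (rearr Z) t = ennreal (\<phi> t / t - (\<phi> t - 1) / (t - 1)) * (\<integral>\<^sup>+w\<in>{0..t}. rearr Z w \<partial>lborel)
     + ennreal ((\<phi> t - 1) / (t - 1)) * (\<integral>\<^sup>+x. Z x \<partial>Om)"
proof -
  define a where "a = \<phi> t / t"
  define b where "b = (\<phi> t - 1) / (t - 1)"
  have ph: "t \<le> \<phi> t" "\<phi> t \<le> 1" using phi_ge[OF p] phi_range[OF p] t by auto
  have a1: "1 \<le> a" using t ph by (simp add: a_def)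
  have b0: "0 \<le> b" using t ph by (simp add: b_def divide_nonpos_neg)
  have b1: "b \<le> 1"
  proof -
    have "b = (1 - \<phi> t) / (1 - t)" unfolding b_def by (metis minus_diff_eq minus_divide_divide)
    also have "\<dots> \<le> 1" using t ph by simp
    finally show ?thesis .
  qed
  have ea: "ennreal a = ennreal (a - b) + ennreal b" using a1 b1 b0 by (simp add: ennreal_plus[symmetric] del: ennreal_plus)
  have tot: "(\<integral>\<^sup>+x. Z x \<partial>Om) = (\<integral>\<^sup>+w\<in>{0..t}. rearr Z w \<partial>lborel) + (\<integral>\<^sup>+w\<in>{t..1}. rearr Z w \<partial>lborel)"
    using int_Om_le_TM(1)[OF p Z] split_01[OF rearr_meas[OF Z], of t] t by simp
  show ?thesis unfolding val_def a_def[symmetric] b_def[symmetric] tot ea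
    by (simp add: distrib_left distrib_right add_ac)
qed

lemma TM_triangle:
  assumes p: "phiok \<phi>" and X: "X \<in> Mplus" and Y: "Y \<in> Mplus"
  shows "TM_norm \<phi> (\<lambda>x. X x + Y x) \<le> TM_norm \<phi> X + TM_norm \<phi> Y"
  unfolding TM_val
proof (rule SUP_least)
  fix t :: real assume t: "t \<in> {0<..<1}"
  have t0: "0 < t" "t < 1" using t by auto
  have XY: "(\<lambda>x. X x + Y x) \<in> Mplus" using X Y unfolding Mplus_def by measurable
  have "val \<phi> (rearr (\<lambda>x. X x + Y x)) t \<le> val \<phi> (rearr X) t + val \<phi> (rearr Y) t"
  proof -
    have i: "(\<integral>\<^sup>+x. X x + Y x \<partial>Om) = (\<integral>\<^sup>+x. X x \<partial>Om) + (\<integral>\<^sup>+x. Y x \<partial>Om)"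
      using X Y unfolding Mplus_def by (intro nn_integral_add) auto
    define A where "A = ennreal (\<phi> t / t - (\<phi> t - 1) / (t - 1))"
    define B where "B = ennreal ((\<phi> t - 1) / (t - 1))"
    have h: "A * (\<integral>\<^sup>+w\<in>{0..t}. rearr (\<lambda>x. X x + Y x) w \<partial>lborel)
        \<le> A * ((\<integral>\<^sup>+w\<in>{0..t}. rearr X w \<partial>lborel) + (\<integral>\<^sup>+w\<in>{0..t}. rearr Y w \<partial>lborel))"
      using t HL[OF X Y, of t] by (intro mult_left_mono) auto
    have "val \<phi> (rearr (\<lambda>x. X x + Y x)) t = A * (\<integral>\<^sup>+w\<in>{0..t}. rearr (\<lambda>x. X x + Y x) w \<partial>lborel)
        + B * ((\<integral>\<^sup>+x. X x \<partial>Om) + (\<integral>\<^sup>+x. Y x \<partial>Om))"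
      using val_split[OF p XY t0] i by (simp add: A_def B_def)
    also have "\<dots> \<le> A * ((\<integral>\<^sup>+w\<in>{0..t}. rearr X w \<partial>lborel) + (\<integral>\<^sup>+w\<in>{0..t}. rearr Y w \<partial>lborel))
        + B * ((\<integral>\<^sup>+x. X x \<partial>Om) + (\<integral>\<^sup>+x. Y x \<partial>Om))"
      by (rule add_right_mono[OF h])
    also have "\<dots> = val \<phi> (rearr X) t + val \<phi> (rearr Y) t"
      unfolding val_split[OF p X t0] val_split[OF p Y t0]
      by (simp add: A_def[symmetric] B_def[symmetric] distrib_left add_ac)
    finally show ?thesis .
  qed
  also have "\<dots> \<le> (SUP t\<in>{0<..<1}. val \<phi> (rearr X) t) + (SUP t\<in>{0<..<1}. val \<phi> (rearr Y) t)"
    using t by (intro add_mono SUP_upper)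
  finally show "val \<phi> (rearr (\<lambda>x. X x + Y x)) t \<le> (SUP t\<in>{0<..<1}. val \<phi> (rearr X) t) + (SUP t\<in>{0<..<1}. val \<phi> (rearr Y) t)" .
qed

definition cell :: "real \<Rightarrow> real \<Rightarrow> nat \<Rightarrow> nat \<Rightarrow> real set" where
  "cell a L n j = {a + real j * L / real n ..< a + real (Suc j) * L / real n}"

definition stepf :: "real \<Rightarrow> real \<Rightarrow> nat \<Rightarrow> (nat \<Rightarrow> real) \<Rightarrow> real \<Rightarrow> real" where
  "stepf a L n g x = (\<Sum>j<n. g j * indicator (cell a L n j) x)"

definition idx :: "real \<Rightarrow> real \<Rightarrow> nat \<Rightarrow> real \<Rightarrow> nat" where
  "idx a L n x = nat \<lfloor>(x - a) * real n / L\<rfloor>"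

lemma cell_disj:
  assumes L: "0 < L" and n: "0 < n" and j: "j < j'"
  shows "cell a L n j \<inter> cell a L n j' = {}"
proof -
  have "real (Suc j) * L / real n \<le> real j' * L / real n"
    using j L n by (intro divide_right_mono mult_right_mono) auto
  then show ?thesis unfolding cell_def by auto
qed

lemma cell_disj': "0 < L \<Longrightarrow> 0 < n \<Longrightarrow> j \<noteq> j' \<Longrightarrow> cell a L n j \<inter> cell a L n j' = {}"
  by (metis cell_disj inf_commute linorder_neqE_nat)

lemma cell_sub:
  assumes L: "0 < L" and n: "0 < n" and j: "j < n"
  shows "cell a L n j \<subseteq> {a..<a + L}"
proof -
  have "0 \<le> real j * L / real n" using L by simp
  moreover have "real (Suc j) * L / real n \<le> L"
    using j L n by (simp add: divide_le_eq mult.commute mult_left_mono)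
  ultimately show ?thesis unfolding cell_def by auto
qed

lemma in_cell_idx:
  assumes L: "0 < L" and n: "0 < n" and x: "a \<le> x" "x < a + L"
  shows "idx a L n x < n \<and> x \<in> cell a L n (idx a L n x)"
proof -
  define y where "y = (x - a) * real n / L"
  have y0: "0 \<le> y" using x L by (simp add: y_def)
  have yn: "y < real n" using x L n by (simp add: y_def divide_less_eq mult.commute)
  have fl: "real (idx a L n x) \<le> y" "y < real (idx a L n x) + 1"
    using y0 unfolding idx_def y_def[symmetric] by (auto simp: of_nat_floor)
  have "idx a L n x < n" using fl yn by linarith
  moreover have "a + real (idx a L n x) * L / real n \<le> x"
  proof -
    have "real (idx a L n x) * L / real n \<le> y * L / real n" using fl L n by (intro divide_right_mono mult_right_mono) auto
    also have "\<dots> = x - a" using L n by (simp add: y_def)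
    finally show ?thesis by simp
  qed
  moreover have "x < a + real (Suc (idx a L n x)) * L / real n"
  proof -
    have "x - a = y * L / real n" using L n by (simp add: y_def)
    also have "\<dots> < real (Suc (idx a L n x)) * L / real n" using fl L n
      by (intro divide_strict_right_mono mult_strict_right_mono) auto
    finally show ?thesis by simp
  qed
  ultimately show ?thesis unfolding cell_def by auto
qed

lemma stepf_cell:
  assumes L: "0 < L" and n: "0 < n" and j: "j < n" and x: "x \<in> cell a L n j"
  shows "stepf a L n g x = g j"
proof -
  have "stepf a L n g x = (\<Sum>i<n. if i = j then g j else 0)"
    unfolding stepf_def
  proof (intro sum.cong refl)
    fix i assume "i \<in> {..<n}"
    show "g i * indicator (cell a L n i) x = (if i = j then g j else 0)"
      using cell_disj'[OF L n, of i j a] x by (auto simp: indicator_def)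
  qed
  also have "\<dots> = g j" using j by simp
  finally show ?thesis .
qed

lemma stepf_out:
  assumes L: "0 < L" and n: "0 < n" and x: "x \<notin> {a..<a + L}"
  shows "stepf a L n g x = 0"
proof -
  have "\<And>j. j < n \<Longrightarrow> x \<notin> cell a L n j" using cell_sub[OF L n] x by blast
  then show ?thesis unfolding stepf_def by (intro sum.neutral) (auto simp: indicator_def)
qed

lemma cell_sets[measurable]: "cell a L n j \<in> sets borel"
  by (simp add: cell_def)

lemma stepf_value:
  assumes L: "0 < L" and n: "0 < n"
  shows "stepf a L n g x = (if a \<le> x \<and> x < a + L then g (idx a L n x) else 0)"
  using stepf_cell[OF L n] stepf_out[OF L n] in_cell_idx[OF L n] by auto

lemma stepf_meas: "stepf a L n g \<in> borel_measurable borel"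
  unfolding stepf_def[abs_def] cell_def by measurable

lemma stepf_nonneg: "(\<And>j. 0 \<le> g j) \<Longrightarrow> 0 \<le> stepf a L n g x"
  unfolding stepf_def by (intro sum_nonneg) auto

lemma stepf_set:
  fixes g :: "nat \<Rightarrow> real" and l :: real
  assumes L: "0 < L" and n: "0 < n" and l: "0 \<le> l"
  shows "{x. l < stepf a L n g x} = (\<Union>j\<in>{j\<in>{..<n}. l < g j}. cell a L n j)"
proof (intro set_eqI iffI)
  fix x assume "x \<in> {x. l < stepf a L n g x}"
  then have "l < stepf a L n g x" by simp
  then show "x \<in> (\<Union>j\<in>{j\<in>{..<n}. l < g j}. cell a L n j)"
    using stepf_value[OF L n, of a g x] in_cell_idx[OF L n, of a x] l
    by (auto split: if_splits)
next
  fix x assume "x \<in> (\<Union>j\<in>{j\<in>{..<n}. l < g j}. cell a L n j)"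
  then obtain j where "j < n" "l < g j" "x \<in> cell a L n j" by auto
  then show "x \<in> {x. l < stepf a L n g x}" using stepf_cell[OF L n] by auto
qed

lemma emeasure_cell:
  assumes L: "0 < L" and n: "0 < n"
  shows "emeasure lborel (cell a L n j) = ennreal (L / real n)"
proof -
  have le: "a + real j * L / real n \<le> a + real (Suc j) * L / real n"
    using L n by (intro add_left_mono divide_right_mono mult_right_mono) auto
  have "real (Suc j) * L - real j * L = L" by (simp add: algebra_simps)
  then have "a + real (Suc j) * L / real n - (a + real j * L / real n) = L / real n"
    by (simp add: diff_divide_distrib[symmetric])
  then show ?thesis unfolding cell_def using le by simp
qed

lemma stepf_measure:
  fixes g :: "nat \<Rightarrow> real" and l :: real
  assumes L: "0 < L" and n: "0 < n" and l: "0 \<le> l"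
  shows "emeasure lborel {x. l < stepf a L n g x} = (\<Sum>j<n. if l < g j then ennreal (L / real n) else 0)"
proof -
  have "emeasure lborel {x. l < stepf a L n g x} = (\<Sum>j\<in>{j\<in>{..<n}. l < g j}. emeasure lborel (cell a L n j))"
    unfolding stepf_set[OF L n l]
  proof (rule sum_emeasure[symmetric])
    show "disjoint_family_on (cell a L n) {j \<in> {..<n}. l < g j}"
      using cell_disj'[OF L n] by (auto simp: disjoint_family_on_def)
  qed auto
  also have "\<dots> = (\<Sum>j\<in>{j\<in>{..<n}. l < g j}. ennreal (L / real n))" by (simp add: emeasure_cell[OF L n])
  also have "\<dots> = (\<Sum>j<n. if l < g j then ennreal (L / real n) else 0)"
    by (rule sum.inter_filter) simp
  finally show ?thesis .
qed

lemma stepf_int: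
  assumes L: "0 < L" and n: "0 < n" and g: "\<And>j. 0 \<le> g j"
  shows "(\<integral>\<^sup>+x. ennreal (stepf a L n g x) \<partial>lborel) = ennreal (L / real n * (\<Sum>j<n. g j))"
proof -
  have "(\<integral>\<^sup>+x. ennreal (stepf a L n g x) \<partial>lborel) = (\<integral>\<^sup>+x. (\<Sum>j<n. ennreal (g j) * indicator (cell a L n j) x) \<partial>lborel)"
    unfolding stepf_def using g
    by (intro nn_integral_cong) (simp add: ennreal_mult indicator_def sum_ennreal[symmetric] del: sum_ennreal)
  also have "\<dots> = (\<Sum>j<n. \<integral>\<^sup>+x. ennreal (g j) * indicator (cell a L n j) x \<partial>lborel)"
    by (rule nn_integral_sum) auto
  also have "\<dots> = (\<Sum>j<n. ennreal (g j) * ennreal (L / real n))"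
    by (intro sum.cong refl) (simp add: nn_integral_cmult_indicator emeasure_cell[OF L n])
  also have "\<dots> = ennreal (\<Sum>j<n. g j * (L / real n))"
    using g L by (simp add: ennreal_mult[symmetric] sum_divide_distrib)
  also have "(\<Sum>j<n. g j * (L / real n)) = L / real n * (\<Sum>j<n. g j)"
    by (subst sum_distrib_left) (rule sum.cong, simp_all add: mult.commute)
  finally show ?thesis .
qed

lemma riemann_upper:
  fixes f :: "real \<Rightarrow> real"
  assumes L: "0 < L" and n: "0 < n" and am: "antimono f" and f0: "\<And>x. 0 \<le> f x"
  shows "(\<integral>\<^sup>+w\<in>{a..a+L}. ennreal (f w) \<partial>lborel) \<le> ennreal (L / real n * (\<Sum>j<n. f (a + real j * L / real n)))"
proof -
  have "(\<integral>\<^sup>+w\<in>{a..a+L}. ennreal (f w) \<partial>lborel) \<le> (\<integral>\<^sup>+w. ennreal (stepf a L n (\<lambda>j. f (a + real j * L / real n)) w) \<partial>lborel)"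
  proof (rule nn_integral_mono_AE)
    show "AE w in lborel. ennreal (f w) * indicator {a..a+L} w \<le> ennreal (stepf a L n (\<lambda>j. f (a + real j * L / real n)) w)"
      using AE_lborel_singleton[of "a + L"]
    proof eventually_elim
      fix w assume w: "w \<noteq> a + L"
      show "ennreal (f w) * indicator {a..a+L} w \<le> ennreal (stepf a L n (\<lambda>j. f (a + real j * L / real n)) w)"
      proof (cases "a \<le> w \<and> w < a + L")
        case True
        have c: "w \<in> cell a L n (idx a L n w)" using in_cell_idx[OF L n] True by auto
        then have "a + real (idx a L n w) * L / real n \<le> w" unfolding cell_def by auto
        then have "f w \<le> f (a + real (idx a L n w) * L / real n)" using am by (auto simp: antimono_def)
        then show ?thesis using True stepf_value[OF L n] by (auto simp: indicator_def intro: ennreal_leI)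
      next
        case False
        then have "w \<notin> {a..a+L}" using w by auto
        then show ?thesis by simp
      qed
    qed
  qed
  also have "\<dots> = ennreal (L / real n * (\<Sum>j<n. f (a + real j * L / real n)))"
    by (rule stepf_int[OF L n f0])
  finally show ?thesis .
qed

lemma sum_shift_le:
  fixes g :: "nat \<Rightarrow> real"
  assumes "\<And>j. 0 \<le> g j"
  shows "(\<Sum>j<n. g j) \<le> g 0 + (\<Sum>j<n. g (Suc j))"
proof (cases n)
  case 0
  then show ?thesis using assms by simp
next
  case (Suc m)
  have "(\<Sum>j<n. g j) = g 0 + (\<Sum>j<m. g (Suc j))" unfolding Suc by (rule sum.lessThan_Suc_shift)
  also have "\<dots> \<le> g 0 + (\<Sum>j<n. g (Suc j))" unfolding Suc using assms by simp
  finally show ?thesis .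
qed

lemma sum_mod_shift1:
  assumes n: "0 < (n::nat)"
  shows "(\<Sum>j<n. h ((j + 1) mod n)) = (\<Sum>j<n. h j)"
proof -
  obtain m where m: "n = Suc m" using n by (cases n) auto
  have "(\<Sum>j<n. h ((j + 1) mod n)) = (\<Sum>j<m. h ((j + 1) mod n)) + h ((m + 1) mod n)"
    unfolding m by simp
  also have "(\<Sum>j<m. h ((j + 1) mod n)) = (\<Sum>j<m. h (Suc j))"
    by (intro sum.cong refl) (simp add: m)
  also have "(m + 1) mod n = 0" by (simp add: m)
  also have "(\<Sum>j<m. h (Suc j)) + h 0 = (\<Sum>j<n. h j)"
    unfolding m sum.lessThan_Suc_shift by (simp add: add.commute)
  finally show ?thesis .
qed

lemma sum_mod_shift:
  assumes n: "0 < (n::nat)"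
  shows "(\<Sum>j<n. g ((j + k) mod n)) = (\<Sum>j<n. g j)"
proof (induction k)
  case 0
  have "(\<Sum>j<n. g (j mod n)) = (\<Sum>j<n. g j)" by (intro sum.cong refl) simp
  then show ?case by simp
next
  case (Suc k)
  have "(\<Sum>j<n. g ((j + Suc k) mod n)) = (\<Sum>j<n. (\<lambda>i. g ((i + k) mod n)) ((j + 1) mod n))"
    by (intro sum.cong refl) (simp add: mod_add_left_eq)
  also have "\<dots> = (\<Sum>j<n. g ((j + k) mod n))" by (rule sum_mod_shift1[OF n])
  finally show ?case using Suc by simp
qed

lemma R_mono: "ri_function_norm R \<Longrightarrow> X \<in> Mplus \<Longrightarrow> Y \<in> Mplus \<Longrightarrow> AE x in Om. X x \<le> Y x \<Longrightarrow> R X \<le> R Y"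
  unfolding ri_function_norm_def banach_function_norm_def by blast

lemma R_add: "ri_function_norm R \<Longrightarrow> X \<in> Mplus \<Longrightarrow> Y \<in> Mplus \<Longrightarrow> R (\<lambda>x. X x + Y x) \<le> R X + R Y"
  unfolding ri_function_norm_def banach_function_norm_def by blast

lemma R_hom: "ri_function_norm R \<Longrightarrow> X \<in> Mplus \<Longrightarrow> 0 \<le> c \<Longrightarrow> R (\<lambda>x. ennreal c * X x) = ennreal c * R X"
  unfolding ri_function_norm_def banach_function_norm_def by blast

lemma R_zero: assumes "ri_function_norm R" shows "R (\<lambda>x. 0) = 0"
proof -
  have "(\<lambda>x. 0::ennreal) \<in> Mplus" unfolding Mplus_def by simp
  then show ?thesis using assms unfolding ri_function_norm_def banach_function_norm_def by auto
qed

lemma R_ri: "ri_function_norm R \<Longrightarrow> X \<in> Mplus \<Longrightarrow> Y \<in> Mplus \<Longrightarrow> (\<And>l. 0 \<le> l \<Longrightarrow> distr_fun X l = distr_fun Y l) \<Longrightarrow> R X = R Y"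
  unfolding ri_function_norm_def rearrangement_invariant_def by blast

lemma R_pte: "PTE R \<Longrightarrow> X \<in> Mplus \<Longrightarrow> 0 \<le> c \<Longrightarrow> R (\<lambda>x. X x + ennreal c) = R X + ennreal c"
  unfolding PTE_def by blast

lemma R_sum:
  fixes h :: "nat \<Rightarrow> real \<Rightarrow> ennreal" and m :: nat
  assumes R: "ri_function_norm R" and h: "\<And>k. h k \<in> Mplus"
  shows "R (\<lambda>x. \<Sum>k<m. h k x) \<le> (\<Sum>k<m. R (h k))"
proof (induction m)
  case 0
  then show ?case using R_zero[OF R] by simp
next
  case (Suc m)
  have hs: "(\<lambda>x. \<Sum>k<m. h k x) \<in> Mplus" using h unfolding Mplus_def by (intro borel_measurable_sum) auto
  have "R (\<lambda>x. \<Sum>k<Suc m. h k x) = R (\<lambda>x. (\<Sum>k<m. h k x) + h m x)" by simp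
  also have "\<dots> \<le> R (\<lambda>x. \<Sum>k<m. h k x) + R (h m)" using R_add[OF R hs h] .
  also have "\<dots> \<le> (\<Sum>k<m. R (h k)) + R (h m)" using Suc by (intro add_right_mono)
  finally show ?case by simp
qed

lemma R_rearr:
  assumes R: "ri_function_norm R" and Z: "Z \<in> Mplus"
  shows "R (rearr Z) = R Z"
  using R_ri[OF R rearr_Mplus[OF Z] Z] DF_rearr[OF Z] unfolding distr_fun_def DF_def by simp

lemma AE_Om_ne: "AE x in Om. x \<noteq> c"
proof -
  have "AE x in lebesgue. x \<noteq> c" by (rule AE_completion[OF AE_lborel_singleton])
  then show ?thesis by (subst AE_restrict_space_iff) (auto elim: eventually_mono)
qed

lemma stepf_set_meas: "{x. l < stepf a L n g x} \<in> sets borel"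
  using stepf_meas[of a L n g] by measurable

lemma core_bound:
  fixes f :: "real \<Rightarrow> real" and N :: real and n :: nat
  assumes p: "phiok \<phi>" and pte: "PTE R" and R: "ri_function_norm R"
    and fund: "has_fundamental_function R \<phi>"
    and t: "0 < t" "t < 1" and n: "0 < n"
    and am: "antimono f" and f0: "\<And>x. 0 \<le> f x" and fN: "\<And>x. f x \<le> N"
    and fm: "f \<in> borel_measurable borel"
  shows "val \<phi> (\<lambda>w. ennreal (f w)) t \<le> R (\<lambda>w. ennreal (f w)) + ennreal (N / real n)"
proof -
  have t1: "0 < 1 - t" using t by simp
  have tt: "t + (1 - t) = 1" by simp
  define av where "av j = f (real (Suc j) * t / real n)" for j
  define bv where "bv j = f (t + real (Suc j) * (1 - t) / real n)" for j
  define s1 where "s1 k = stepf 0 t n (\<lambda>j. av ((j + k) mod n))" for k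
  define s2 where "s2 k = stepf t (1 - t) n (\<lambda>j. bv ((j + k) mod n))" for k
  define S where "S k x = s1 k x + s2 k x" for k x
  define SA where "SA = (\<Sum>j<n. av j)"
  define SB where "SB = (\<Sum>j<n. bv j)"
  define F where "F = (\<lambda>w. ennreal (f w))"
  have av0: "0 \<le> av j" for j unfolding av_def by (rule f0)
  have bv0: "0 \<le> bv j" for j unfolding bv_def by (rule f0)
  have avt: "f t \<le> av j" if "j < n" for j
  proof -
    have "real (Suc j) * t / real n \<le> t"
      using that t n by (simp add: divide_le_eq mult.commute mult_left_mono)
    then show ?thesis unfolding av_def using am by (auto simp: antimono_def)
  qed
  have bvt: "bv j \<le> f t" for j
  proof -
    have "t \<le> t + real (Suc j) * (1 - t) / real n" using t by simp
    then show ?thesis unfolding bv_def using am by (auto simp: antimono_def)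
  qed
  have SAB: "SB \<le> SA" unfolding SA_def SB_def
    by (intro sum_mono) (meson avt bvt lessThan_iff order_trans)
  have SB0: "0 \<le> SB" unfolding SB_def by (intro sum_nonneg) (simp add: bv0)
  have s1v: "s1 k x = (if 0 \<le> x \<and> x < t then av ((idx 0 t n x + k) mod n) else 0)" for k x
    unfolding s1_def using stepf_value[OF t(1) n] by simp
  have s2v: "s2 k x = (if t \<le> x \<and> x < 1 then bv ((idx t (1 - t) n x + k) mod n) else 0)" for k x
    unfolding s2_def using stepf_value[OF t1 n] by simp
  have s1m: "s1 k \<in> borel_measurable borel" for k unfolding s1_def by (rule stepf_meas)
  have s2m: "s2 k \<in> borel_measurable borel" for k unfolding s2_def by (rule stepf_meas)
  have S0: "0 \<le> S k x" for k x unfolding S_def s1_def s2_def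
    using av0 bv0 by (intro add_nonneg_nonneg stepf_nonneg) auto
  have SM: "(\<lambda>x. ennreal (S k x)) \<in> Mplus" for k
    unfolding Mplus_def S_def using s1m s2m by (intro borel_Om) measurable
  have FM: "F \<in> Mplus" unfolding Mplus_def F_def using fm by (intro borel_Om) measurable
  have Sle: "S 0 x \<le> f x" for x
  proof -
    consider "0 \<le> x" "x < t" | "t \<le> x" "x < 1" | "x < 0 \<or> 1 \<le> x" by linarith
    then show ?thesis
    proof cases
      case 1
      have c: "idx 0 t n x < n \<and> x \<in> cell 0 t n (idx 0 t n x)" using in_cell_idx[OF t(1) n, of 0 x] 1 by simp
      then have "x < real (Suc (idx 0 t n x)) * t / real n" unfolding cell_def by simp
      then have "av (idx 0 t n x) \<le> f x" unfolding av_def using am by (auto simp: antimono_def)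
      then show ?thesis using 1 c unfolding S_def s1v s2v by simp
    next
      case 2
      have c: "idx t (1 - t) n x < n \<and> x \<in> cell t (1 - t) n (idx t (1 - t) n x)"
        using in_cell_idx[OF t1 n, of t x] 2 by simp
      then have "x < t + real (Suc (idx t (1 - t) n x)) * (1 - t) / real n" unfolding cell_def by simp
      then have "bv (idx t (1 - t) n x) \<le> f x" unfolding bv_def using am by (auto simp: antimono_def)
      then show ?thesis using 2 c t unfolding S_def s1v s2v by simp
    next
      case 3
      then show ?thesis using f0[of x] t unfolding S_def s1v s2v by auto
    qed
  qed
  have distr: "distr_fun (\<lambda>x. ennreal (S k x)) l =
      (\<Sum>j<n. if l < av j then ennreal (t / real n) else 0) + (\<Sum>j<n. if l < bv j then ennreal ((1 - t) / real n) else 0)"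
    if l: "0 \<le> l" for k l
  proof -
    have set_eq: "{x \<in> space Om. ennreal l < ennreal (S k x)} = {x. l < s1 k x} \<union> {x. l < s2 k x}"
    proof (intro set_eqI iffI)
      fix x assume "x \<in> {x \<in> space Om. ennreal l < ennreal (S k x)}"
      then have x: "0 \<le> x" "x \<le> 1" "l < S k x" using l by (auto simp: ennreal_less_iff)
      then show "x \<in> {x. l < s1 k x} \<union> {x. l < s2 k x}"
        unfolding S_def s1v s2v using l by (auto split: if_splits)
    next
      fix x assume "x \<in> {x. l < s1 k x} \<union> {x. l < s2 k x}"
      then consider "l < s1 k x" | "l < s2 k x" by auto
      then show "x \<in> {x \<in> space Om. ennreal l < ennreal (S k x)}"
      proof cases
        case 1
        then have "0 \<le> x \<and> x < t" using l unfolding s1v by (auto split: if_splits)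
        then show ?thesis using 1 l t unfolding S_def s2v by (auto simp: ennreal_less_iff)
      next
        case 2
        then have "t \<le> x \<and> x < 1" using l unfolding s2v by (auto split: if_splits)
        then show ?thesis using 2 l t unfolding S_def s1v by (auto simp: ennreal_less_iff)
      qed
    qed
    have A: "{x. l < s1 k x} \<in> sets borel" "{x. l < s2 k x} \<in> sets borel"
      unfolding s1_def s2_def by (rule stepf_set_meas)+
    have sub: "{x. l < s1 k x} \<union> {x. l < s2 k x} \<subseteq> {0..1}"
      using l t unfolding s1v s2v by (auto split: if_splits)
    have disj: "{x. l < s1 k x} \<inter> {x. l < s2 k x} = {}"
      using l unfolding s1v s2v by (auto split: if_splits)
    have "distr_fun (\<lambda>x. ennreal (S k x)) l = emeasure lborel ({x. l < s1 k x} \<union> {x. l < s2 k x})"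
      unfolding distr_fun_def set_eq using A sub by (intro emeasure_Om) auto
    also have "\<dots> = emeasure lborel {x. l < s1 k x} + emeasure lborel {x. l < s2 k x}"
      using A disj by (intro plus_emeasure[symmetric]) auto
    also have "emeasure lborel {x. l < s1 k x} = (\<Sum>j<n. if l < av j then ennreal (t / real n) else 0)"
      unfolding s1_def stepf_measure[OF t(1) n l]
      by (rule sum_mod_shift[OF n, of "\<lambda>i. if l < av i then ennreal (t / real n) else 0"])
    also have "emeasure lborel {x. l < s2 k x} = (\<Sum>j<n. if l < bv j then ennreal ((1 - t) / real n) else 0)"
      unfolding s2_def stepf_measure[OF t1 n l]
      by (rule sum_mod_shift[OF n, of "\<lambda>i. if l < bv i then ennreal ((1 - t) / real n) else 0"])
    finally show ?thesis .
  qed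
  have RS: "R (\<lambda>x. ennreal (S k x)) = R (\<lambda>x. ennreal (S 0 x))" for k
    by (intro R_ri[OF R SM SM]) (simp only: distr)
  define G where "G x = (\<Sum>k<n. ennreal (1 / real n) * ennreal (S k x))" for x
  have RG: "R G \<le> R (\<lambda>x. ennreal (S 0 x))"
  proof -
    have hM: "(\<lambda>x. ennreal (1 / real n) * ennreal (S k x)) \<in> Mplus" for k
      using SM[of k] unfolding Mplus_def by (intro borel_measurable_times_ennreal) auto
    have "R G \<le> (\<Sum>k<n. R (\<lambda>x. ennreal (1 / real n) * ennreal (S k x)))"
      unfolding G_def by (rule R_sum[OF R hM])
    also have "\<dots> = (\<Sum>k<n. ennreal (1 / real n) * R (\<lambda>x. ennreal (S 0 x)))"
    proof (intro sum.cong refl)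
      fix k
      show "R (\<lambda>x. ennreal (1 / real n) * ennreal (S k x)) = ennreal (1 / real n) * R (\<lambda>x. ennreal (S 0 x))"
        using R_hom[OF R SM[of k], of "1 / real n"] RS[of k] by simp
    qed
    also have "\<dots> = of_nat n * ennreal (1 / real n) * R (\<lambda>x. ennreal (S 0 x))" by (simp add: mult.assoc)
    also have "of_nat n * ennreal (1 / real n) = 1"
      using n by (simp add: ennreal_of_nat_eq_real_of_nat ennreal_mult[symmetric])
    finally show ?thesis by simp
  qed
  define E where "E = {0..<t}"
  have EOm: "E \<in> sets Om" unfolding E_def using sets_Om_borel[of "{0..<t}"] t by (simp add: Int_absorb2 atLeastLessThan_subseteq_atLeastAtMost_iff)
  have mE: "measure Om E = t"
  proof -
    have "emeasure Om E = emeasure lborel {0..<t}" unfolding E_def using t by (intro emeasure_Om) auto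
    then show ?thesis using t by (simp add: measure_def)
  qed
  define H where "H x = ennreal ((SA - SB) / real n) * indicator E x + ennreal (SB / real n)" for x
  have HG: "AE x in Om. H x \<le> G x"
    using AE_Om_ne[of 1]
  proof (rule AE_mp[OF _ AE_I2], intro impI)
    fix x assume x: "x \<in> space Om" and x1: "x \<noteq> 1"
    have xr: "0 \<le> x" "x < 1" using x x1 by auto
    show "H x \<le> G x"
    proof (cases "x < t")
      case True
      have "G x = (\<Sum>k<n. ennreal (1 / real n) * ennreal (av ((k + idx 0 t n x) mod n)))"
        unfolding G_def S_def s1v s2v using True xr by (simp add: add.commute)
      also have "\<dots> = ennreal (\<Sum>k<n. 1 / real n * av ((k + idx 0 t n x) mod n))"
        using av0 by (simp add: ennreal_mult[symmetric])
      also have "(\<Sum>k<n. 1 / real n * av ((k + idx 0 t n x) mod n)) = 1 / real n * SA"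
        unfolding SA_def sum_distrib_left[symmetric]
        using sum_mod_shift[OF n, of av "idx 0 t n x"] by simp
      finally have "G x = ennreal (SA / real n)" by simp
      moreover have "H x = ennreal (SA / real n)"
      proof -
        have "H x = ennreal ((SA - SB) / real n) + ennreal (SB / real n)"
          unfolding H_def E_def using True xr by simp
        also have "\<dots> = ennreal ((SA - SB) / real n + SB / real n)"
          using SAB SB0 n by (intro ennreal_plus[symmetric]) auto
        also have "(SA - SB) / real n + SB / real n = SA / real n" by (simp add: diff_divide_distrib)
        finally show ?thesis .
      qed
      ultimately show ?thesis by simp
    next
      case False
      have "G x = (\<Sum>k<n. ennreal (1 / real n) * ennreal (bv ((k + idx t (1 - t) n x) mod n)))"
        unfolding G_def S_def s1v s2v using False xr by (simp add: add.commute)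
      also have "\<dots> = ennreal (\<Sum>k<n. 1 / real n * bv ((k + idx t (1 - t) n x) mod n))"
        using bv0 by (simp add: ennreal_mult[symmetric])
      also have "(\<Sum>k<n. 1 / real n * bv ((k + idx t (1 - t) n x) mod n)) = 1 / real n * SB"
        unfolding SB_def sum_distrib_left[symmetric]
        using sum_mod_shift[OF n, of bv "idx t (1 - t) n x"] by simp
      finally have "G x = ennreal (SB / real n)" by simp
      moreover have "H x = ennreal (SB / real n)"
        unfolding H_def E_def using False by simp
      ultimately show ?thesis by simp
    qed
  qed
  have GM: "G \<in> Mplus" unfolding G_def Mplus_def using SM unfolding Mplus_def by measurable
  have IM: "(\<lambda>x. ennreal ((SA - SB) / real n) * indicator E x) \<in> Mplus"
    unfolding Mplus_def using EOm by (intro borel_measurable_times_ennreal) auto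
  have HM: "H \<in> Mplus" unfolding H_def using Mplus_shift[OF IM] .
  have RH: "R H = ennreal ((SA - SB) / real n) * ennreal (\<phi> t) + ennreal (SB / real n)"
  proof -
    have "R H = R (\<lambda>x. ennreal ((SA - SB) / real n) * indicator E x) + ennreal (SB / real n)"
      unfolding H_def using SB0 n by (intro R_pte[OF pte IM]) simp
    also have "R (\<lambda>x. ennreal ((SA - SB) / real n) * indicator E x) = ennreal ((SA - SB) / real n) * R (indicator E)"
      using SAB n EOm by (intro R_hom[OF R]) (auto simp: Mplus_def)
    also have "R (indicator E) = ennreal (\<phi> t)" using fund EOm mE unfolding has_fundamental_function_def by simp
    finally show ?thesis .
  qed
  have RSF: "R (\<lambda>x. ennreal (S 0 x)) \<le> R F"
    using Sle by (intro R_mono[OF R SM FM] AE_I2) (simp add: F_def ennreal_leI)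
  have chain: "ennreal ((SA - SB) / real n) * ennreal (\<phi> t) + ennreal (SB / real n) \<le> R F"
    using R_mono[OF R HM GM HG] RG RSF RH by simp
  have I1: "(\<integral>\<^sup>+w\<in>{0..t}. F w \<partial>lborel) \<le> ennreal (t / real n * (N + SA))"
  proof -
    have "(\<integral>\<^sup>+w\<in>{0..t}. F w \<partial>lborel) \<le> ennreal (t / real n * (\<Sum>j<n. f (real j * t / real n)))"
      using riemann_upper[OF t(1) n am f0, of 0] unfolding F_def by simp
    also have "\<dots> \<le> ennreal (t / real n * (N + SA))"
    proof (intro ennreal_leI mult_left_mono)
      have "(\<Sum>j<n. f (real j * t / real n)) \<le> f (real 0 * t / real n) + (\<Sum>j<n. f (real (Suc j) * t / real n))"
        by (rule sum_shift_le[of "\<lambda>j. f (real j * t / real n)"]) (rule f0)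
      then show "(\<Sum>j<n. f (real j * t / real n)) \<le> N + SA" unfolding SA_def av_def using fN[of 0] by simp
    qed (use t in simp)
    finally show ?thesis .
  qed
  have I2: "(\<integral>\<^sup>+w\<in>{t..1}. F w \<partial>lborel) \<le> ennreal ((1 - t) / real n * (N + SB))"
  proof -
    have "(\<integral>\<^sup>+w\<in>{t..1}. F w \<partial>lborel) \<le> ennreal ((1 - t) / real n * (\<Sum>j<n. f (t + real j * (1 - t) / real n)))"
      using riemann_upper[OF t1 n am f0, of t] unfolding F_def by simp
    also have "\<dots> \<le> ennreal ((1 - t) / real n * (N + SB))"
    proof (intro ennreal_leI mult_left_mono)
      have "(\<Sum>j<n. f (t + real j * (1 - t) / real n)) \<le> f (t + real 0 * (1 - t) / real n) + (\<Sum>j<n. f (t + real (Suc j) * (1 - t) / real n))"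
        by (rule sum_shift_le[of "\<lambda>j. f (t + real j * (1 - t) / real n)"]) (rule f0)
      then show "(\<Sum>j<n. f (t + real j * (1 - t) / real n)) \<le> N + SB" unfolding SB_def bv_def using fN[of t] by simp
    qed (use t in simp)
    finally show ?thesis .
  qed
  define a where "a = \<phi> t / t"
  define b where "b = (\<phi> t - 1) / (t - 1)"
  have ph: "t \<le> \<phi> t" "\<phi> t \<le> 1" using phi_ge[OF p] phi_range[OF p] t by auto
  have a0: "0 \<le> a" using t ph by (simp add: a_def)
  have b0: "0 \<le> b" using t ph by (simp add: b_def divide_nonpos_neg)
  have at: "a * t = \<phi> t" using t by (simp add: a_def)
  have bt: "b * (1 - t) = 1 - \<phi> t" using t by (simp add: b_def field_simps)
  have N0: "0 \<le> N" using f0[of 0] fN[of 0] by simp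
  have SA0: "0 \<le> SA" using SAB SB0 by simp
  have "val \<phi> F t \<le> ennreal a * ennreal (t / real n * (N + SA)) + ennreal b * ennreal ((1 - t) / real n * (N + SB))"
    unfolding val_def a_def[symmetric] b_def[symmetric] using I1 I2 by (intro add_mono mult_left_mono) auto
  also have "\<dots> = ennreal (a * (t / real n * (N + SA)) + b * ((1 - t) / real n * (N + SB)))"
    using a0 b0 t N0 SA0 SB0 by (simp add: ennreal_mult[symmetric] ennreal_plus[symmetric] del: ennreal_plus)
  also have "a * (t / real n * (N + SA)) + b * ((1 - t) / real n * (N + SB))
      = (SA - SB) / real n * \<phi> t + SB / real n + N / real n"
  proof -
    have e1: "a * (t / real n * (N + SA)) = (a * t) * (N + SA) / real n" by simp
    have e2: "b * ((1 - t) / real n * (N + SB)) = (b * (1 - t)) * (N + SB) / real n" by simp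
    have e3: "\<phi> t * (N + SA) / real n + (1 - \<phi> t) * (N + SB) / real n = (\<phi> t * (N + SA) + (1 - \<phi> t) * (N + SB)) / real n"
      by (simp add: add_divide_distrib)
    have e4: "(SA - SB) / real n * \<phi> t + SB / real n + N / real n = ((SA - SB) * \<phi> t + SB + N) / real n"
      by (simp add: add_divide_distrib)
    have e5: "\<phi> t * (N + SA) + (1 - \<phi> t) * (N + SB) = (SA - SB) * \<phi> t + SB + N"
      by (simp add: algebra_simps)
    show ?thesis unfolding e1 e2 at bt e3 e4 e5 ..
  qed
  also have "ennreal ((SA - SB) / real n * \<phi> t + SB / real n + N / real n)
      = ennreal ((SA - SB) / real n) * ennreal (\<phi> t) + ennreal (SB / real n) + ennreal (N / real n)"
    using SAB SB0 N0 ph t by (simp add: ennreal_mult[symmetric] ennreal_plus[symmetric] del: ennreal_plus)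
  also have "\<dots> \<le> R F + ennreal (N / real n)" using chain by (rule add_right_mono)
  finally show ?thesis unfolding F_def .
qed

lemma SUP_min_nat: "(SUP i. min a (of_nat i :: ennreal)) = a"
proof (rule antisym)
  show "(SUP i. min a (of_nat i :: ennreal)) \<le> a" by (rule SUP_least) simp
  show "a \<le> (SUP i. min a (of_nat i :: ennreal))"
  proof (cases a)
    case top
    then have "(SUP i. min a (of_nat i :: ennreal)) = (SUP i. of_nat i)" by simp
    then show ?thesis using top by (simp add: ennreal_SUP_of_nat_eq_top)
  next
    case (real r)
    obtain i :: nat where "r \<le> real i" using real_arch_simple by blast
    then have "min a (of_nat i) = a" using real by (simp add: ennreal_of_nat_eq_real_of_nat ennreal_leI)
    then show ?thesis by (metis SUP_upper UNIV_I)
  qed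
qed

lemma bound_trunc:
  assumes p: "phiok \<phi>" and pte: "PTE R" and R: "ri_function_norm R"
    and fund: "has_fundamental_function R \<phi>"
    and t: "0 < t" "t < 1"
    and am: "antimono f" and f0: "\<And>x. 0 \<le> f x" and fN: "\<And>x. f x \<le> real i"
    and fm: "f \<in> borel_measurable borel"
  shows "val \<phi> (\<lambda>w. ennreal (f w)) t \<le> R (\<lambda>w. ennreal (f w))"
proof (rule ennreal_le_epsilon)
  fix e :: real assume e: "0 < e"
  obtain n :: nat where n: "real i < real n * e" using ex_less_of_nat_mult[OF e] by blast
  have n0: "0 < n" using n e by (cases n) auto
  have "real i / real n < e" using n n0 by (simp add: divide_less_eq mult.commute)
  then have "ennreal (real i / real n) \<le> ennreal e" by (intro ennreal_leI) simp
  then show "val \<phi> (\<lambda>w. ennreal (f w)) t \<le> R (\<lambda>w. ennreal (f w)) + ennreal e"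
    using core_bound[OF p pte R fund t n0 am f0 fN fm] by (meson add_left_mono order_trans)
qed

lemma TM_le_R:
  assumes p: "phiok \<phi>" and pte: "PTE R" and R: "ri_function_norm R"
    and fund: "has_fundamental_function R \<phi>" and Z: "Z \<in> Mplus"
  shows "TM_norm \<phi> Z \<le> R Z"
  unfolding TM_val
proof (rule SUP_least)
  fix t :: real assume "t \<in> {0<..<1}"
  then have t: "0 < t" "t < 1" by auto
  define Fi where "Fi i w = min (rearr Z w) (of_nat i)" for i :: nat and w
  define fi where "fi i w = enn2real (Fi i w)" for i w
  have Fitop: "Fi i w < top" for i w unfolding Fi_def by (rule min.strict_coboundedI2) (simp add: ennreal_of_nat_eq_real_of_nat)
  have Fi_eq: "Fi i w = ennreal (fi i w)" for i w unfolding fi_def using Fitop by simp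
  have Fim: "Fi i \<in> borel_measurable borel" for i unfolding Fi_def[abs_def] using rearr_meas[OF Z] by measurable
  have fim: "fi i \<in> borel_measurable borel" for i unfolding fi_def[abs_def] using Fim by measurable
  have fiam: "antimono (fi i)" for i
  proof (rule antimonoI)
    fix x y :: real assume "x \<le> y"
    then have "rearr Z y \<le> rearr Z x" by (rule rearr_antimono)
    then have "Fi i y \<le> Fi i x" unfolding Fi_def by (intro min.mono) auto
    then show "fi i y \<le> fi i x" unfolding fi_def using Fitop by (intro enn2real_mono) auto
  qed
  have fi0: "0 \<le> fi i x" for i x unfolding fi_def by simp
  have fiN: "fi i x \<le> real i" for i x
  proof -
    have "Fi i x \<le> of_nat i" unfolding Fi_def by simp
    then have "fi i x \<le> enn2real (of_nat i :: ennreal)" unfolding fi_def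
      by (intro enn2real_mono) (auto simp: ennreal_of_nat_eq_real_of_nat)
    then show ?thesis by simp
  qed
  have FiM: "Fi i \<in> Mplus" for i unfolding Mplus_def using borel_Om[OF Fim] .
  have each: "val \<phi> (Fi i) t \<le> R Z" for i
  proof -
    have "val \<phi> (Fi i) t = val \<phi> (\<lambda>w. ennreal (fi i w)) t" using Fi_eq by presburger
    also have "\<dots> \<le> R (\<lambda>w. ennreal (fi i w))"
      by (rule bound_trunc[OF p pte R fund t fiam fi0 fiN fim])
    also have "R (\<lambda>w. ennreal (fi i w)) = R (Fi i)" using Fi_eq by presburger
    also have "R (Fi i) \<le> R (rearr Z)"
      by (intro R_mono[OF R FiM rearr_Mplus[OF Z]] AE_I2) (simp add: Fi_def)
    also have "R (rearr Z) = R Z" by (rule R_rearr[OF R Z])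
    finally show ?thesis .
  qed
  have incF: "incseq (\<lambda>i. Fi i w)" for w
    unfolding Fi_def incseq_def by (intro allI impI min.mono) auto
  have "rearr Z = (\<lambda>w. SUP i. Fi i w)" unfolding Fi_def SUP_min_nat ..
  then have "val \<phi> (rearr Z) t = (SUP i. val \<phi> (Fi i) t)" using val_SUP[OF Fim incF] by simp
  also have "\<dots> \<le> R Z" by (rule SUP_least) (rule each)
  finally show "val \<phi> (rearr Z) t \<le> R Z" .
qed

theorem theorem19:
  fixes \<phi> :: "real \<Rightarrow> real"
  assumes "\<forall>t\<in>{0..1}. \<phi> t \<in> {0..1}"
    and "concave_on {0..1} \<phi>"
    and "\<phi> 0 = 0" and "\<phi> 1 = 1"
  shows "PTE (TM_norm \<phi>) \<and> ri_function_norm (TM_norm \<phi>) \<and> has_fundamental_function (TM_norm \<phi>) \<phi>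
    \<and> (\<forall>R. PTE R \<and> ri_function_norm R \<and> has_fundamental_function R \<phi> \<longrightarrow>
         (\<forall>X::real \<Rightarrow> real. X \<in> borel_measurable Om \<and> R (\<lambda>x. ennreal \<bar>X x\<bar>) < \<infinity> \<longrightarrow>
            M_norm \<phi> (\<lambda>x. ennreal \<bar>X x\<bar>) \<le> TM_norm \<phi> (\<lambda>x. ennreal \<bar>X x\<bar>)
          \<and> TM_norm \<phi> (\<lambda>x. ennreal \<bar>X x\<bar>) \<le> R (\<lambda>x. ennreal \<bar>X x\<bar>)))"
proof -
  have p: "phiok \<phi>" unfolding phiok_def using assms by blast
  have h1: "\<forall>X\<in>Mplus. TM_norm \<phi> X = 0 \<longleftrightarrow> (AE x in Om. X x = 0)" using TM_null[OF p] by blast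
  have h2: "\<forall>X\<in>Mplus. \<forall>c::real. c \<ge> 0 \<longrightarrow> TM_norm \<phi> (\<lambda>x. ennreal c * X x) = ennreal c * TM_norm \<phi> X"
    using TM_cmult by blast
  have h3: "\<forall>X\<in>Mplus. \<forall>Y\<in>Mplus. TM_norm \<phi> (\<lambda>x. X x + Y x) \<le> TM_norm \<phi> X + TM_norm \<phi> Y"
    using TM_triangle[OF p] by blast
  have h4: "\<forall>X\<in>Mplus. \<forall>Y\<in>Mplus. (AE x in Om. X x \<le> Y x) \<longrightarrow> TM_norm \<phi> X \<le> TM_norm \<phi> Y"
    using TM_mono by blast
  have h5: "\<forall>Xs X. (\<forall>n. Xs n \<in> Mplus) \<longrightarrow> X \<in> Mplus \<longrightarrow>
        (AE x in Om. incseq (\<lambda>n. Xs n x) \<and> (\<lambda>n. Xs n x) \<longlonglongrightarrow> X x) \<longrightarrow>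
        (\<lambda>n. TM_norm \<phi> (Xs n)) \<longlonglongrightarrow> TM_norm \<phi> X"
    using TM_Fatou by blast
  have h6: "\<forall>E\<in>sets Om. TM_norm \<phi> (indicator E) < \<infinity> \<and>
        (\<exists>c::real. 0 < c \<and> (\<forall>X\<in>Mplus. (\<integral>\<^sup>+ x\<in>E. X x \<partial>Om) \<le> ennreal c * TM_norm \<phi> X))"
    using TM_cE[OF p] by blast
  have h7: "TM_norm \<phi> (indicator (space Om)) = 1" by (rule TM_norm1[OF p])
  have bfn: "banach_function_norm (TM_norm \<phi>)"
    unfolding banach_function_norm_def by (intro conjI h1 h2 h3 h4 h5 h6 h7)
  have ri: "ri_function_norm (TM_norm \<phi>)" unfolding ri_function_norm_def using bfn TM_ri by blast
  have ff: "has_fundamental_function (TM_norm \<phi>) \<phi>"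
    unfolding has_fundamental_function_def using TM_ind[OF p] by blast
  have last: "M_norm \<phi> (\<lambda>x. ennreal \<bar>X x\<bar>) \<le> TM_norm \<phi> (\<lambda>x. ennreal \<bar>X x\<bar>)
          \<and> TM_norm \<phi> (\<lambda>x. ennreal \<bar>X x\<bar>) \<le> R (\<lambda>x. ennreal \<bar>X x\<bar>)"
    if R: "PTE R" "ri_function_norm R" "has_fundamental_function R \<phi>"
      and X: "X \<in> borel_measurable Om" for R and X :: "real \<Rightarrow> real"
  proof -
    have Z: "(\<lambda>x. ennreal \<bar>X x\<bar>) \<in> Mplus" unfolding Mplus_def using X by measurable
    show ?thesis using M_le_TM[OF p Z] TM_le_R[OF p R Z] by simp
  qed
  show ?thesis using TM_PTE[OF p] ri ff last by blast
qed

end
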